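(* Let $f(X)=\mathbb{E}_{\xi\sim\mathcal{D}}[f_\xi(X)]$ on $\mathcal{S}$, each $f_\xi$ continuously differentiable, $f^{\inf}:=\inf_X f(X)>-\infty$, and suppose $f$ is layer-wise $(L^0,L^1)$-smooth with constants $L^0,L^1\in\mathbb{R}^p_+$. Assume the stochastic gradients are unbiased, $\mathbb{E}_\xi[\nabla f_\xi(X)]=\nabla f(X)$, and have bounded relative variance: there is $0\le\zeta<1$ such that almost surely $\|\nabla_i f_\xi(X)-\nabla_i f(X)\|_{(i)\star}\le\zeta\|\nabla_i f_\xi(X)\|_{(i)\star}$ for all $X$ and $i$. Fix $\varepsilon>0$ and run stochastic Gluon with $\beta^k=0$ (so $M_i^k=\nabla_i f_{\xi^k}(X^k)$) and radii $$t_i^k=\frac{(1-\zeta)\|\nabla_i f_{\xi^k}(X^k)\|_{(i)\star}}{L^0_i+(1+\zeta)L^1_i\|\nabla_i f_{\xi^k}(X^k)\|_{(i)\star}}$$ (assumed well defined, with $t_i^k:=0$ when $\nabla_i f_{\xi^k}(X^k)=0$). Let $\Delta^0:=f(X^0)-f^{\inf}$, $L^1_{\max}:=\max_iL^1_i$. Then: (1) With $K:=\left\lceil\frac{2\Delta^0\sum_{i=1}^pL^0_i}{(1-\zeta)^2\varepsilon^2}+\frac{2(1+\zeta)L^1_{\max}\Delta^0}{(1-\zeta)^2\varepsilon}\right\rceil$ (provided $K\ge1$), $\min_{k=0,\dots,K-1}\sum_{i=1}^p\mathbb{E}\|\nabla_i f(X^k)\|_{(i)\star}\le\varepsilon$.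 (2) If $L^1_i>0$ for all $i$, set $H:=\frac1p\sum_{j=1}^p\frac1{L^1_j}$ and $K:=\left\lceil\frac{2\Delta^0\sum_{i=1}^p\frac{L^0_i}{(L^1_i)^2}}{\varepsilon^2(1-\zeta)^2H^2}+\frac{2\Delta^0(1+\zeta)}{\varepsilon(1-\zeta)^2H}\right\rceil$; then (provided $K\ge1$) $\min_{k=0,\dots,K-1}\sum_{i=1}^p\frac{1/L^1_i}{H}\mathbb{E}\|\nabla_i f(X^k)\|_{(i)\star}\le\varepsilon$.
   Context: $\mathcal{S}=\mathcal{S}_1\times\cdots\times\mathcal{S}_p$ with $\mathcal{S}_i=\mathbb{R}^{m_i\times n_i}$; $X=[X_1,\dots,X_p]$. Each $\mathcal{S}_i$ has the trace inner product $\langle X_i,Y_i\rangle_{(i)}=\operatorname{tr}(X_i^\top Y_i)$ and a norm $\|\cdot\|_{(i)}$ with dual norm $\|Y_i\|_{(i)\star}=\sup_{\|Z_i\|_{(i)}\le1}\langle Y_i,Z_i\rangle_{(i)}$; $\nabla_i$ denotes the gradient block for $X_i$. Layer-wise $(L^0,L^1)$-smoothness: for all $i$, $X,Y$, $\|\nabla_i f(X)-\nabla_i f(Y)\|_{(i)\star}\le (L^0_i+L^1_i\|\nabla_i f(X)\|_{(i)\star})\|X_i-Y_i\|_{(i)}$. Stochastic Gluon: at iteration $k$ sample $\xi^k\sim\mathcal{D}$ independently of the past, set $M_i^k=\beta^kM_i^{k-1}+(1-\beta^k)\nabla_i f_{\xi^k}(X^k)$ and $X_i^{k+1}\in\arg\min\{\langle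 M_i^k,X_i\rangle_{(i)}:\|X_i-X_i^k\|_{(i)}\le t_i^k\}$ (any minimizer) for each $i$, $X^{k+1}=[X_1^{k+1},\dots,X_p^{k+1}]$. Expectations are over the sampling. *)

theory Defs
  imports "HOL-Probability.Probability"
begin

text \<open>The product space S = S_1 x ... x S_p of matrix spaces is represented by its
  vectorisation: a vector in real^'n (finite index type 'n of all matrix entries),
  together with a map lay assigning each entry (coordinate) to its layer.
  The trace inner product of matrices is the entrywise (Euclidean) inner product.\<close>

definition layer_space :: "('n \<Rightarrow> nat) \<Rightarrow> nat \<Rightarrow> (real^'n) set" where
  "layer_space lay i = {x. \<forall>k. lay k \<noteq> i \<longrightarrow> x $ k = 0}"

definition blk :: "('n \<Rightarrow> nat) \<Rightarrow> nat \<Rightarrow> real^'n \<Rightarrow> real^'n" where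
  "blk lay i x = (\<chi> k. if lay k = i then x $ k else 0)"

definition norm_on :: "'v::real_vector set \<Rightarrow> ('v \<Rightarrow> real) \<Rightarrow> bool" where
  "norm_on V N \<longleftrightarrow>
     (\<forall>x\<in>V. 0 \<le> N x) \<and> (\<forall>x\<in>V. N x = 0 \<longleftrightarrow> x = 0) \<and>
     (\<forall>x\<in>V. \<forall>c. N (c *\<^sub>R x) = \<bar>c\<bar> * N x) \<and>
     (\<forall>x\<in>V. \<forall>y\<in>V. N (x + y) \<le> N x + N y)"

definition dual_norm :: "('n \<Rightarrow> nat) \<Rightarrow> (real^'n \<Rightarrow> real) \<Rightarrow> nat \<Rightarrow> real^'n \<Rightarrow> real" where
  "dual_norm lay Ni i y = Sup {blk lay i y \<bullet> z | z. z \<in> layer_space lay i \<and> Ni z \<le> 1}"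

definition layerwise_L0L1_smooth ::
  "('n \<Rightarrow> nat) \<Rightarrow> nat \<Rightarrow> (nat \<Rightarrow> real^'n \<Rightarrow> real) \<Rightarrow> (nat \<Rightarrow> real) \<Rightarrow> (nat \<Rightarrow> real)
    \<Rightarrow> (real^'n \<Rightarrow> real^'n) \<Rightarrow> bool" where
  "layerwise_L0L1_smooth lay p N L0 L1 gF \<longleftrightarrow>
     (\<forall>i<p. \<forall>X Y. dual_norm lay (N i) i (gF X - gF Y)
        \<le> (L0 i + L1 i * dual_norm lay (N i) i (gF X)) * N i (blk lay i X - blk lay i Y))"

definition lmo_step :: "('n \<Rightarrow> nat) \<Rightarrow> (real^'n \<Rightarrow> real) \<Rightarrow> nat \<Rightarrow> real^'n \<Rightarrow> real^'n \<Rightarrow> real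
     \<Rightarrow> real^'n \<Rightarrow> bool" where
  "lmo_step lay Ni i M Xk t Xk1 \<longleftrightarrow>
     is_arg_min (\<lambda>Z. blk lay i M \<bullet> Z)
       (\<lambda>Z. Z \<in> layer_space lay i \<and> Ni (Z - blk lay i Xk) \<le> t) (blk lay i Xk1)"

end

theory Submission
  imports Defs
begin


lemma blk_in: "blk lay i x \<in> layer_space lay i"
  by (simp add: blk_def layer_space_def)
lemma blk_id: "z \<in> layer_space lay i \<Longrightarrow> blk lay i z = z"
  by (auto simp: blk_def layer_space_def vec_eq_iff)
lemma blk_add: "blk lay i (x + y) = blk lay i x + blk lay i y"
  by (simp add: blk_def vec_eq_iff)
lemma blk_diff: "blk lay i (x - y) = blk lay i x - blk lay i y"
  by (simp add: blk_def vec_eq_iff)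
lemma blk_minus: "blk lay i (- x) = - blk lay i x"
  by (simp add: blk_def vec_eq_iff)
lemma blk_scale: "blk lay i (c *\<^sub>R x) = c *\<^sub>R blk lay i x"
  by (simp add: blk_def vec_eq_iff)
lemma blk_inner: "z \<in> layer_space lay i \<Longrightarrow> blk lay i y \<bullet> z = y \<bullet> z"
  unfolding inner_vec_def blk_def layer_space_def
  by (intro sum.cong) auto
lemma norm_blk: "norm (blk lay i y) \<le> norm y"
  by (rule norm_le_componentwise_cart) (simp add: blk_def)

lemma ls_0: "0 \<in> layer_space lay i" by (simp add: layer_space_def)
lemma ls_add: "x \<in> layer_space lay i \<Longrightarrow> y \<in> layer_space lay i \<Longrightarrow> x + y \<in> layer_space lay i"
  by (simp add: layer_space_def)
lemma ls_diff: "x \<in> layer_space lay i \<Longrightarrow> y \<in> layer_space lay i \<Longrightarrow> x - y \<in> layer_space lay i"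
  by (simp add: layer_space_def)
lemma ls_minus: "x \<in> layer_space lay i \<Longrightarrow> - x \<in> layer_space lay i"
  by (simp add: layer_space_def)
lemma ls_scale: "x \<in> layer_space lay i \<Longrightarrow> c *\<^sub>R x \<in> layer_space lay i"
  by (simp add: layer_space_def)
lemma ls_sum: "finite S \<Longrightarrow> (\<And>j. j \<in> S \<Longrightarrow> v j \<in> layer_space lay i) \<Longrightarrow> sum v S \<in> layer_space lay i"
  by (induction S rule: finite_induct) (auto simp: ls_0 ls_add)

lemma inner_blk_sum:
  fixes lay :: "'n::finite \<Rightarrow> nat"
  assumes "\<forall>k. lay k < p"
  shows "x \<bullet> y = (\<Sum>i<p. blk lay i x \<bullet> blk lay i y)"
proof -
  have "(\<Sum>i<p. blk lay i x \<bullet> blk lay i y) = (\<Sum>i<p. \<Sum>j\<in>UNIV. if lay j = i then x$j * y$j else 0)"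
    unfolding inner_vec_def blk_def by (intro sum.cong) auto
  also have "\<dots> = (\<Sum>j\<in>UNIV. \<Sum>i<p. if lay j = i then x$j * y$j else 0)"
    by (rule sum.swap)
  also have "\<dots> = (\<Sum>j\<in>UNIV. x$j * y$j)"
    using assms by (intro sum.cong) (auto simp: sum.delta)
  finally show ?thesis by (simp add: inner_vec_def)
qed

context
  fixes V :: "(real^'n::finite) set" and Nf :: "real^'n \<Rightarrow> real"
  assumes nrm: "norm_on V Nf"
begin

lemma N_nonneg: "x \<in> V \<Longrightarrow> 0 \<le> Nf x" using nrm by (simp add: norm_on_def)
lemma N_eq0: "x \<in> V \<Longrightarrow> Nf x = 0 \<longleftrightarrow> x = 0" using nrm by (simp add: norm_on_def)
lemma N_scale: "x \<in> V \<Longrightarrow> Nf (c *\<^sub>R x) = \<bar>c\<bar> * Nf x" using nrm by (simp add: norm_on_def)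
lemma N_tri: "x \<in> V \<Longrightarrow> y \<in> V \<Longrightarrow> Nf (x + y) \<le> Nf x + Nf y" using nrm by (simp add: norm_on_def)
lemma N_minus: "x \<in> V \<Longrightarrow> Nf (- x) = Nf x" using N_scale[of x "-1"] by simp
end



lemma N_sum:
  assumes "norm_on V Nf" "finite S" "\<And>j. j \<in> S \<Longrightarrow> v j \<in> layer_space lay i"
    and "V = layer_space lay i"
  shows "Nf (sum v S) \<le> (\<Sum>j\<in>S. Nf (v j))"
  using assms(2,3)
proof (induction S rule: finite_induct)
  case empty
  then show ?case using N_eq0[OF assms(1), of 0] assms(4) ls_0[of lay i] by simp
next
  case (insert x F)
  have "Nf (sum v (insert x F)) = Nf (v x + sum v F)" using insert by simp
  also have "\<dots> \<le> Nf (v x) + Nf (sum v F)"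
    using N_tri[OF assms(1)] insert ls_sum[of F v lay i] assms(4) by auto
  also have "\<dots> \<le> Nf (v x) + (\<Sum>j\<in>F. Nf (v j))" using insert by auto
  finally show ?case using insert by simp
qed

lemma ls_expand:
  fixes z :: "real^'n::finite"
  assumes "z \<in> layer_space lay i"
  shows "z = (\<Sum>j\<in>{j. lay j = i}. z$j *\<^sub>R axis j 1)"
  using assms by (auto simp: vec_eq_iff sum_component axis_def layer_space_def if_distrib cong: if_cong)

lemma axis_ls: "lay j = i \<Longrightarrow> axis j 1 \<in> layer_space lay i"
  by (auto simp: axis_def layer_space_def)

lemma N_upper:
  fixes lay :: "'n::finite \<Rightarrow> nat"
  assumes nrm: "norm_on (layer_space lay i) Nf"
  shows "\<exists>C\<ge>0. \<forall>z\<in>layer_space lay i. Nf z \<le> C * norm z"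
proof -
  let ?J = "{j. lay j = i}"
  define C where "C = (\<Sum>j\<in>?J. Nf (axis j 1))"
  have C0: "C \<ge> 0" unfolding C_def using N_nonneg[OF nrm] axis_ls by (intro sum_nonneg) auto
  have "Nf z \<le> C * norm z" if z: "z \<in> layer_space lay i" for z
  proof -
    have "Nf z = Nf (\<Sum>j\<in>?J. z$j *\<^sub>R axis j 1)" using ls_expand[OF z] by simp
    also have "\<dots> \<le> (\<Sum>j\<in>?J. Nf (z$j *\<^sub>R axis j 1))"
      by (rule N_sum[OF nrm]) (auto intro: ls_scale axis_ls)
    also have "\<dots> = (\<Sum>j\<in>?J. \<bar>z$j\<bar> * Nf (axis j 1))"
      by (intro sum.cong refl N_scale[OF nrm]) (auto intro: axis_ls)
    also have "\<dots> \<le> (\<Sum>j\<in>?J. norm z * Nf (axis j 1))"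
      by (intro sum_mono mult_right_mono component_le_norm_cart N_nonneg[OF nrm]) (auto intro: axis_ls)
    also have "\<dots> = C * norm z" by (simp add: C_def sum_distrib_left mult.commute)
    finally show ?thesis .
  qed
  with C0 show ?thesis by blast
qed

lemma closed_ls: "closed (layer_space lay i :: (real^'n::finite) set)"
proof -
  have "layer_space lay i = (\<Inter>k\<in>{k. lay k \<noteq> i}. {x::real^'n. x $ k = 0})"
    by (auto simp: layer_space_def)
  moreover have "closed {x::real^'n. x $ k = 0}" for k
    by (intro closed_Collect_eq continuous_intros)
  ultimately show ?thesis by (auto intro: closed_INT)
qed

lemma N_lip:
  fixes lay :: "'n::finite \<Rightarrow> nat"
  assumes nrm: "norm_on (layer_space lay i) Nf" and C: "\<forall>z\<in>layer_space lay i. Nf z \<le> C * norm z"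
    and x: "x \<in> layer_space lay i" and y: "y \<in> layer_space lay i"
  shows "\<bar>Nf x - Nf y\<bar> \<le> C * norm (x - y)"
proof -
  have "Nf x \<le> Nf (x - y) + Nf y" using N_tri[OF nrm, of "x - y" y] ls_diff[OF x y] y by simp
  moreover have "Nf y \<le> Nf (y - x) + Nf x" using N_tri[OF nrm, of "y - x" x] ls_diff[OF y x] x by simp
  moreover have "Nf (y - x) = Nf (x - y)" using N_minus[OF nrm, of "x - y"] ls_diff[OF x y] by simp
  moreover have "Nf (x - y) \<le> C * norm (x - y)" using C ls_diff[OF x y] by blast
  ultimately show ?thesis by linarith
qed

lemma N_lower:
  fixes lay :: "'n::finite \<Rightarrow> nat"
  assumes nrm: "norm_on (layer_space lay i) Nf"
  shows "\<exists>m>0. \<forall>z\<in>layer_space lay i. m * norm z \<le> Nf z"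
proof -
  let ?V = "layer_space lay i"
  obtain C where C: "C \<ge> 0" "\<forall>z\<in>?V. Nf z \<le> C * norm z" using N_upper[OF nrm] by blast
  let ?S = "?V \<inter> sphere 0 1"
  show ?thesis
  proof (cases "?S = {}")
    case True
    have "z = 0" if "z \<in> ?V" for z
    proof (rule ccontr)
      assume "z \<noteq> 0"
      then have "(1 / norm z) *\<^sub>R z \<in> ?S" using that ls_scale by auto
      with True show False by blast
    qed
    then show ?thesis using N_nonneg[OF nrm] by (intro exI[of _ 1]) fastforce
  next
    case False
    have cpt: "compact ?S" using closed_ls by (intro closed_Int_compact) auto
    have "continuous_on ?V Nf"
    proof (rule continuous_onI)
      fix x e assume "x \<in> ?V" "(e::real) > 0"
      show "\<exists>d>0. \<forall>x'\<in>?V. dist x' x < d \<longrightarrow> dist (Nf x') (Nf x) \<le> e"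
      proof (intro exI[of _ "e / (C + 1)"] conjI ballI impI)
        show "e / (C + 1) > 0" using \<open>e > 0\<close> C by simp
        fix x' assume x': "x' \<in> ?V" "dist x' x < e / (C + 1)"
        have "dist (Nf x') (Nf x) \<le> C * norm (x' - x)"
          using N_lip[OF nrm C(2) x'(1) \<open>x \<in> ?V\<close>] by (simp add: dist_real_def)
        also have "\<dots> \<le> (C + 1) * dist x' x" using C by (simp add: dist_norm mult_right_mono)
        also have "\<dots> \<le> e" using x'(2) C by (simp add: field_simps)
        finally show "dist (Nf x') (Nf x) \<le> e" .
      qed
    qed
    then have "continuous_on ?S Nf" by (rule continuous_on_subset) auto
    then obtain z0 where z0: "z0 \<in> ?S" "\<forall>y\<in>?S. Nf z0 \<le> Nf y"
      using continuous_attains_inf[OF cpt False] by blast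
    have pos: "Nf z0 > 0" using z0(1) N_eq0[OF nrm, of z0] N_nonneg[OF nrm, of z0] by auto
    have "Nf z0 * norm z \<le> Nf z" if z: "z \<in> ?V" for z
    proof (cases "z = 0")
      case True then show ?thesis using N_nonneg[OF nrm z] by simp
    next
      case False
      then have "(1 / norm z) *\<^sub>R z \<in> ?S" using z ls_scale by auto
      then have "Nf z0 \<le> Nf ((1 / norm z) *\<^sub>R z)" using z0 by blast
      also have "\<dots> = Nf z / norm z" using N_scale[OF nrm z] by simp
      finally show ?thesis using False by (simp add: field_simps)
    qed
    then show ?thesis using pos by blast
  qed
qed



lemma dual_set_bound:
  fixes lay :: "'n::finite \<Rightarrow> nat"
  assumes nrm: "norm_on (layer_space lay i) Nf"
  shows "\<exists>B\<ge>0. \<forall>y z. z \<in> layer_space lay i \<and> Nf z \<le> 1 \<longrightarrow> blk lay i y \<bullet> z \<le> B * norm y"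
proof -
  obtain m where m: "m > 0" "\<forall>z\<in>layer_space lay i. m * norm z \<le> Nf z" using N_lower[OF nrm] by blast
  have "blk lay i y \<bullet> z \<le> (1/m) * norm y" if "z \<in> layer_space lay i" "Nf z \<le> 1" for y z
  proof -
    have nz: "norm z \<le> 1/m" using m that by (simp add: field_simps) (smt (verit) mult.commute)
    have "blk lay i y \<bullet> z \<le> norm (blk lay i y) * norm z" by (rule norm_cauchy_schwarz)
    also have "\<dots> \<le> norm y * (1/m)" by (intro mult_mono norm_blk nz) auto
    finally show ?thesis by simp
  qed
  then show ?thesis using m by (intro exI[of _ "1/m"]) auto
qed

context
  fixes lay :: "'n::finite \<Rightarrow> nat" and Nf i
  assumes nrm: "norm_on (layer_space lay i) Nf"
begin

lemma dual_bdd: "bdd_above {blk lay i y \<bullet> z | z. z \<in> layer_space lay i \<and> Nf z \<le> 1}"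
proof -
  obtain B where "\<forall>y z. z \<in> layer_space lay i \<and> Nf z \<le> 1 \<longrightarrow> blk lay i y \<bullet> z \<le> B * norm y"
    using dual_set_bound[OF nrm] by blast
  then show ?thesis by (auto intro!: bdd_aboveI[of _ "B * norm y"])
qed

lemma dual_ne: "{blk lay i y \<bullet> z | z. z \<in> layer_space lay i \<and> Nf z \<le> 1} \<noteq> {}"
  using ls_0[of lay i] N_eq0[OF nrm, of 0] by auto

lemma dual_ge: "z \<in> layer_space lay i \<Longrightarrow> Nf z \<le> 1 \<Longrightarrow> blk lay i y \<bullet> z \<le> dual_norm lay Nf i y"
  unfolding dual_norm_def by (rule cSup_upper[OF _ dual_bdd]) auto

lemma dual_nonneg: "0 \<le> dual_norm lay Nf i y"
  using dual_ge[of 0 y] ls_0[of lay i] N_eq0[OF nrm, of 0] by simp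

lemma dual_least: "(\<And>z. z \<in> layer_space lay i \<Longrightarrow> Nf z \<le> 1 \<Longrightarrow> blk lay i y \<bullet> z \<le> c) \<Longrightarrow> dual_norm lay Nf i y \<le> c"
  unfolding dual_norm_def by (rule cSup_least[OF dual_ne]) auto

lemma dual_inner: 
  assumes z: "z \<in> layer_space lay i"
  shows "blk lay i y \<bullet> z \<le> dual_norm lay Nf i y * Nf z"
proof (cases "Nf z = 0")
  case True
  then have "z = 0" using N_eq0[OF nrm z] by simp
  then show ?thesis using True by simp
next
  case False
  then have pos: "Nf z > 0" using N_nonneg[OF nrm z] by simp
  have "blk lay i y \<bullet> ((1 / Nf z) *\<^sub>R z) \<le> dual_norm lay Nf i y"
    by (rule dual_ge) (use z pos N_scale[OF nrm z] in \<open>auto intro: ls_scale\<close>)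
  then show ?thesis using pos by (simp add: field_simps)
qed

lemma dual_le_norm: "\<exists>B\<ge>0. \<forall>y. dual_norm lay Nf i y \<le> B * norm y"
proof -
  obtain B where B: "B \<ge> 0" "\<forall>y z. z \<in> layer_space lay i \<and> Nf z \<le> 1 \<longrightarrow> blk lay i y \<bullet> z \<le> B * norm y"
    using dual_set_bound[OF nrm] by blast
  show ?thesis using B by (intro exI[of _ B]) (auto intro: dual_least)
qed

lemma dual_tri: "dual_norm lay Nf i (x + y) \<le> dual_norm lay Nf i x + dual_norm lay Nf i y"
proof (rule dual_least)
  fix z assume z: "z \<in> layer_space lay i" "Nf z \<le> 1"
  have "blk lay i (x + y) \<bullet> z = blk lay i x \<bullet> z + blk lay i y \<bullet> z" by (simp add: blk_add inner_add_left)
  also have "\<dots> \<le> dual_norm lay Nf i x + dual_norm lay Nf i y" using dual_ge[OF z] by (intro add_mono)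
  finally show "blk lay i (x + y) \<bullet> z \<le> dual_norm lay Nf i x + dual_norm lay Nf i y" .
qed

lemma dual_minus: "dual_norm lay Nf i (- y) = dual_norm lay Nf i y"
proof -
  have le: "dual_norm lay Nf i (- y) \<le> dual_norm lay Nf i y" for y
  proof (rule dual_least)
    fix z assume z: "z \<in> layer_space lay i" "Nf z \<le> 1"
    have "blk lay i (- y) \<bullet> z = blk lay i y \<bullet> (- z)" by (simp add: blk_minus)
    also have "\<dots> \<le> dual_norm lay Nf i y"
      using z N_minus[OF nrm z(1)] by (intro dual_ge) (auto intro: ls_minus)
    finally show "blk lay i (- y) \<bullet> z \<le> dual_norm lay Nf i y" .
  qed
  show ?thesis using le[of y] le[of "- y"] by simp
qed

lemma dual_cont: "continuous_on UNIV (dual_norm lay Nf i)"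
proof -
  obtain B where B: "B \<ge> 0" "\<forall>y. dual_norm lay Nf i y \<le> B * norm y" using dual_le_norm by blast
  have lip: "\<bar>dual_norm lay Nf i x - dual_norm lay Nf i y\<bar> \<le> B * norm (x - y)" for x y
  proof -
    have "dual_norm lay Nf i x \<le> dual_norm lay Nf i (x - y) + dual_norm lay Nf i y"
      using dual_tri[of "x - y" y] by simp
    moreover have "dual_norm lay Nf i y \<le> dual_norm lay Nf i (y - x) + dual_norm lay Nf i x"
      using dual_tri[of "y - x" x] by simp
    moreover have "dual_norm lay Nf i (y - x) = dual_norm lay Nf i (x - y)"
      using dual_minus[of "x - y"] by simp
    ultimately show ?thesis using B(2)[rule_format, of "x - y"] by linarith
  qed
  show ?thesis
  proof (rule continuous_onI)
    fix x e assume "(e::real) > 0"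
    show "\<exists>d>0. \<forall>x'\<in>UNIV. dist x' x < d \<longrightarrow> dist (dual_norm lay Nf i x') (dual_norm lay Nf i x) \<le> e"
    proof (intro exI[of _ "e / (B + 1)"] conjI ballI impI)
      show "e / (B + 1) > 0" using \<open>e > 0\<close> B by simp
      fix x' assume x': "dist x' x < e / (B + 1)"
      have "dist (dual_norm lay Nf i x') (dual_norm lay Nf i x) \<le> B * norm (x' - x)"
        using lip[of x' x] by (simp add: dist_real_def)
      also have "\<dots> \<le> (B + 1) * dist x' x" using B by (simp add: dist_norm mult_right_mono)
      also have "\<dots> \<le> e" using x' B by (simp add: field_simps)
      finally show "dist (dual_norm lay Nf i x') (dual_norm lay Nf i x) \<le> e" .
    qed
  qed
qed

lemma dual_meas[measurable]: "dual_norm lay Nf i \<in> borel_measurable borel"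
  using dual_cont by (rule borel_measurable_continuous_onI)

end



lemma descent:
  fixes lay :: "'n::finite \<Rightarrow> nat" and f :: "real^'n \<Rightarrow> real"
  assumes lay_range: "\<forall>k. lay k < p"
    and norms: "\<forall>i<p. norm_on (layer_space lay i) (N i)"
    and f_grad: "\<forall>X. (f has_derivative (\<lambda>h. gF X \<bullet> h)) (at X)"
    and smooth: "layerwise_L0L1_smooth lay p N L0 L1 gF"
  shows "f Y \<le> f X + gF X \<bullet> (Y - X)
     + (\<Sum>i<p. (L0 i + L1 i * dual_norm lay (N i) i (gF X)) / 2 * (N i (blk lay i (Y - X)))\<^sup>2)"
proof -
  define D where "D = Y - X"
  define Ci where "Ci i = L0 i + L1 i * dual_norm lay (N i) i (gF X)" for i
  define C where "C = (\<Sum>i<p. Ci i * (N i (blk lay i D))\<^sup>2)"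
  define \<phi> where "\<phi> t = f (X + t *\<^sub>R D) - t * (gF X \<bullet> D) - C / 2 * t\<^sup>2" for t
  have deriv: "(\<phi> has_real_derivative (gF (X + t *\<^sub>R D) \<bullet> D - gF X \<bullet> D - C * t)) (at t)" for t
  proof -
    have d1: "((\<lambda>t. X + t *\<^sub>R D) has_derivative (\<lambda>s. s *\<^sub>R D)) (at t)"
      by (auto intro!: derivative_eq_intros)
    have d2: "((\<lambda>t. f (X + t *\<^sub>R D)) has_derivative (\<lambda>s. gF (X + t *\<^sub>R D) \<bullet> (s *\<^sub>R D))) (at t)"
      by (rule has_derivative_compose[OF d1]) (use f_grad in blast)
    have d3: "((\<lambda>t. f (X + t *\<^sub>R D)) has_real_derivative (gF (X + t *\<^sub>R D) \<bullet> D)) (at t)"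
      by (rule has_derivative_imp_has_field_derivative[OF d2]) simp
    show ?thesis unfolding \<phi>_def
      by (rule derivative_eq_intros d3 refl | simp)+
  qed
  have nonpos: "gF (X + t *\<^sub>R D) \<bullet> D - gF X \<bullet> D - C * t \<le> 0" if t: "0 \<le> t" for t
  proof -
    have "gF (X + t *\<^sub>R D) \<bullet> D - gF X \<bullet> D = (gF (X + t *\<^sub>R D) - gF X) \<bullet> D"
      by (simp add: inner_diff_left)
    also have "\<dots> = (\<Sum>i<p. blk lay i (gF (X + t *\<^sub>R D) - gF X) \<bullet> blk lay i D)"
      by (rule inner_blk_sum[OF lay_range])
    also have "\<dots> \<le> (\<Sum>i<p. t * (Ci i * (N i (blk lay i D))\<^sup>2))"
    proof (rule sum_mono)
      fix i assume i: "i \<in> {..<p}"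
      have nrm: "norm_on (layer_space lay i) (N i)" using norms i by auto
      have "blk lay i (gF (X + t *\<^sub>R D) - gF X) \<bullet> blk lay i D
          = blk lay i (gF X - gF (X + t *\<^sub>R D)) \<bullet> (- blk lay i D)"
        by (simp add: blk_diff inner_diff_left)
      also have "\<dots> \<le> dual_norm lay (N i) i (gF X - gF (X + t *\<^sub>R D)) * N i (- blk lay i D)"
        by (rule dual_inner[OF nrm]) (rule ls_minus[OF blk_in])
      also have "N i (- blk lay i D) = N i (blk lay i D)" by (rule N_minus[OF nrm blk_in])
      also have "dual_norm lay (N i) i (gF X - gF (X + t *\<^sub>R D))
           \<le> Ci i * N i (blk lay i X - blk lay i (X + t *\<^sub>R D))"
        using smooth i unfolding layerwise_L0L1_smooth_def Ci_def by auto
      also have "N i (blk lay i X - blk lay i (X + t *\<^sub>R D)) = t * N i (blk lay i D)"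
      proof -
        have "blk lay i X - blk lay i (X + t *\<^sub>R D) = (- t) *\<^sub>R blk lay i D"
          by (simp add: blk_add blk_scale)
        then show ?thesis using N_scale[OF nrm blk_in, of "-t" D] t by simp
      qed
      finally have "blk lay i (gF (X + t *\<^sub>R D) - gF X) \<bullet> blk lay i D
          \<le> Ci i * (t * N i (blk lay i D)) * N i (blk lay i D)"
        using N_nonneg[OF nrm blk_in, of D] by (simp add: mult_right_mono)
      then show "blk lay i (gF (X + t *\<^sub>R D) - gF X) \<bullet> blk lay i D \<le> t * (Ci i * (N i (blk lay i D))\<^sup>2)"
        by (simp add: power2_eq_square algebra_simps)
    qed
    also have "\<dots> = C * t" by (simp add: C_def sum_distrib_left mult.commute)
    finally show ?thesis by simp
  qed
  have "\<phi> 1 \<le> \<phi> 0"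
    proof (rule DERIV_nonpos_imp_nonincreasing[of 0 1])
    fix x :: real assume "0 \<le> x" "x \<le> 1"
    then show "\<exists>y. (\<phi> has_real_derivative y) (at x) \<and> y \<le> 0"
      using deriv[of x] nonpos[of x] by blast
  qed simp
  then have "f Y \<le> f X + gF X \<bullet> D + C / 2"
    unfolding \<phi>_def D_def by simp
  also have "C / 2 = (\<Sum>i<p. Ci i / 2 * (N i (blk lay i D))\<^sup>2)"
    unfolding C_def by (simp add: sum_divide_distrib)
  finally show ?thesis unfolding D_def Ci_def by simp
qed



lemma lmo_inner:
  fixes lay :: "'n::finite \<Rightarrow> nat"
  assumes nrm: "norm_on (layer_space lay i) Nf" and t: "t \<ge> 0"
    and st: "lmo_step lay Nf i M Xk t Xk1"
  shows "blk lay i M \<bullet> (blk lay i Xk1 - blk lay i Xk) \<le> - t * dual_norm lay Nf i M"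
    and "Nf (blk lay i Xk1 - blk lay i Xk) \<le> t"
proof -
  let ?V = "layer_space lay i"
  let ?W = "blk lay i Xk1" and ?U = "blk lay i Xk"
  have W: "?W \<in> ?V" "Nf (?W - ?U) \<le> t"
    and min: "\<And>Z. Z \<in> ?V \<Longrightarrow> Nf (Z - ?U) \<le> t \<Longrightarrow> blk lay i M \<bullet> ?W \<le> blk lay i M \<bullet> Z"
    using st unfolding lmo_step_def is_arg_min_def by (auto simp: not_less)
  show "Nf (?W - ?U) \<le> t" by (fact W(2))
  have key: "t * (blk lay i M \<bullet> z) \<le> - (blk lay i M \<bullet> (?W - ?U))" if z: "z \<in> ?V" "Nf z \<le> 1" for z
  proof -
    have Z: "?U - t *\<^sub>R z \<in> ?V" using z by (intro ls_diff blk_in ls_scale)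
    have "Nf (?U - t *\<^sub>R z - ?U) = Nf ((-t) *\<^sub>R z)" by simp
    also have "\<dots> = t * Nf z" using N_scale[OF nrm z(1), of "-t"] t by simp
    also have "\<dots> \<le> t" using z t by (simp add: mult_left_le)
    finally have "blk lay i M \<bullet> ?W \<le> blk lay i M \<bullet> (?U - t *\<^sub>R z)" using min Z by blast
    then show ?thesis by (simp add: inner_diff_right)
  qed
  show "blk lay i M \<bullet> (?W - ?U) \<le> - t * dual_norm lay Nf i M"
  proof (cases "t = 0")
    case True
    then have "?W - ?U = 0" using W(2) N_eq0[OF nrm, of "?W - ?U"] N_nonneg[OF nrm, of "?W - ?U"] W(1)
      by (auto intro: ls_diff blk_in)
    then show ?thesis using True by simp
  next
    case False
    then have tp: "t > 0" using t by simp
    have "dual_norm lay Nf i M \<le> - (blk lay i M \<bullet> (?W - ?U)) / t"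
      by (rule dual_least[OF nrm]) (use key tp in \<open>simp add: field_simps\<close>)
    then show ?thesis using tp by (simp add: field_simps)
  qed
qed

lemma step_decrease:
  fixes lay :: "'n::finite \<Rightarrow> nat" and f :: "real^'n \<Rightarrow> real"
  assumes lay_range: "\<forall>k. lay k < p"
    and norms: "\<forall>i<p. norm_on (layer_space lay i) (N i)"
    and f_grad: "\<forall>X. (f has_derivative (\<lambda>h. gF X \<bullet> h)) (at X)"
    and smooth: "layerwise_L0L1_smooth lay p N L0 L1 gF"
    and L_nonneg: "\<forall>i<p. 0 \<le> L0 i \<and> 0 \<le> L1 i"
    and zeta: "0 \<le> \<zeta>" "\<zeta> < 1"
    and rv: "\<forall>i<p. dual_norm lay (N i) i (g - gF X) \<le> \<zeta> * dual_norm lay (N i) i g"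
    and wd: "\<forall>i<p. dual_norm lay (N i) i g \<noteq> 0 \<longrightarrow>
         L0 i + (1 + \<zeta>) * L1 i * dual_norm lay (N i) i g \<noteq> 0"
    and st: "\<forall>i<p. lmo_step lay (N i) i g X
           ((1 - \<zeta>) * dual_norm lay (N i) i g
             / (L0 i + (1 + \<zeta>) * L1 i * dual_norm lay (N i) i g)) Y"
  shows "f Y \<le> f X - (1 - \<zeta>)\<^sup>2 / 2 * (\<Sum>i<p. (dual_norm lay (N i) i g)\<^sup>2
                 / (L0 i + (1 + \<zeta>) * L1 i * dual_norm lay (N i) i g))"
proof -
  have "f Y \<le> f X + gF X \<bullet> (Y - X)
     + (\<Sum>i<p. (L0 i + L1 i * dual_norm lay (N i) i (gF X)) / 2 * (N i (blk lay i (Y - X)))\<^sup>2)"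
    by (rule descent[OF lay_range norms f_grad smooth])
  also have "gF X \<bullet> (Y - X) = (\<Sum>i<p. blk lay i (gF X) \<bullet> blk lay i (Y - X))"
    by (rule inner_blk_sum[OF lay_range])
  finally have "f Y \<le> f X + (\<Sum>i<p. blk lay i (gF X) \<bullet> blk lay i (Y - X)
      + (L0 i + L1 i * dual_norm lay (N i) i (gF X)) / 2 * (N i (blk lay i (Y - X)))\<^sup>2)"
    by (simp add: sum.distrib)
  also have "\<dots> \<le> f X + (\<Sum>i<p. - ((1 - \<zeta>)\<^sup>2 / 2 * ((dual_norm lay (N i) i g)\<^sup>2
                 / (L0 i + (1 + \<zeta>) * L1 i * dual_norm lay (N i) i g))))"
  proof (intro add_left_mono sum_mono)
    fix i assume i: "i \<in> {..<p}"
    have nrm: "norm_on (layer_space lay i) (N i)" using norms i by auto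
    define x where "x = dual_norm lay (N i) i g"
    define y where "y = dual_norm lay (N i) i (gF X)"
    define d where "d = L0 i + (1 + \<zeta>) * L1 i * x"
    define t where "t = (1 - \<zeta>) * x / d"
    define Di where "Di = blk lay i Y - blk lay i X"
    have x0: "x \<ge> 0" unfolding x_def by (rule dual_nonneg[OF nrm])
    have L: "L0 i \<ge> 0" "L1 i \<ge> 0" using L_nonneg i by auto
    have d0: "d \<ge> 0" unfolding d_def using L x0 zeta by simp
    have t0: "t \<ge> 0" unfolding t_def using x0 d0 zeta by simp
    have sti: "lmo_step lay (N i) i g X t Y" using st i unfolding t_def d_def x_def by auto
    have a1: "blk lay i g \<bullet> Di \<le> - t * x" and a2: "N i Di \<le> t"
      using lmo_inner[OF nrm t0 sti] unfolding Di_def x_def by auto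
    have Di_in: "Di \<in> layer_space lay i" unfolding Di_def by (intro ls_diff blk_in)
    have Dn: "N i Di \<ge> 0" by (rule N_nonneg[OF nrm Di_in])
    have rvi: "dual_norm lay (N i) i (g - gF X) \<le> \<zeta> * x" using rv i unfolding x_def by auto
    have "blk lay i (gF X) \<bullet> Di = blk lay i g \<bullet> Di + blk lay i (g - gF X) \<bullet> (- Di)"
      by (simp add: blk_diff inner_diff_left)
    also have "blk lay i (g - gF X) \<bullet> (- Di) \<le> dual_norm lay (N i) i (g - gF X) * N i (- Di)"
      by (rule dual_inner[OF nrm ls_minus[OF Di_in]])
    also have "N i (- Di) = N i Di" by (rule N_minus[OF nrm Di_in])
    also have "dual_norm lay (N i) i (g - gF X) * N i Di \<le> \<zeta> * x * t"
      using rvi a2 Dn zeta x0 by (meson mult_mono mult_nonneg_nonneg)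
    finally have b1: "blk lay i (gF X) \<bullet> Di \<le> - (1 - \<zeta>) * t * x" using a1 by (simp add: algebra_simps)
    have "y \<le> dual_norm lay (N i) i (gF X - g) + dual_norm lay (N i) i g"
      unfolding y_def using dual_tri[OF nrm, of "gF X - g" g] by simp
    also have "dual_norm lay (N i) i (gF X - g) = dual_norm lay (N i) i (g - gF X)"
      using dual_minus[OF nrm, of "g - gF X"] by simp
    finally have yb: "y \<le> (1 + \<zeta>) * x" using rvi unfolding x_def by (simp add: algebra_simps)
    have Ci: "L0 i + L1 i * y \<le> d" unfolding d_def using yb L mult_left_mono[OF yb L(2)] by (simp add: algebra_simps)
    have Ci0: "L0 i + L1 i * y \<ge> 0" using L dual_nonneg[OF nrm] unfolding y_def by simp
    have "(L0 i + L1 i * y) / 2 * (N i Di)\<^sup>2 \<le> d / 2 * t\<^sup>2"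
      using Ci Ci0 a2 Dn by (intro mult_mono divide_right_mono power_mono) auto
    then have tot: "blk lay i (gF X) \<bullet> Di + (L0 i + L1 i * y) / 2 * (N i Di)\<^sup>2 \<le> - (1 - \<zeta>) * t * x + d / 2 * t\<^sup>2"
      using b1 by linarith
    have fin: "- (1 - \<zeta>) * t * x + d / 2 * t\<^sup>2 = - ((1 - \<zeta>)\<^sup>2 / 2 * (x\<^sup>2 / d))"
    proof (cases "x = 0")
      case True then show ?thesis unfolding t_def by simp
    next
      case False
      then have "d \<noteq> 0" using wd i unfolding d_def x_def by auto
      then have "d > 0" using d0 by simp
      then show ?thesis unfolding t_def by (simp add: field_simps power2_eq_square)
    qed
    show "blk lay i (gF X) \<bullet> blk lay i (Y - X) + (L0 i + L1 i * dual_norm lay (N i) i (gF X)) / 2 * (N i (blk lay i (Y - X)))\<^sup>2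
       \<le> - ((1 - \<zeta>)\<^sup>2 / 2 * ((dual_norm lay (N i) i g)\<^sup>2 / (L0 i + (1 + \<zeta>) * L1 i * dual_norm lay (N i) i g)))"
      using tot fin unfolding Di_def y_def d_def x_def by (simp add: blk_diff)
  qed
  also have "\<dots> = f X - (1 - \<zeta>)\<^sup>2 / 2 * (\<Sum>i<p. (dual_norm lay (N i) i g)\<^sup>2
                 / (L0 i + (1 + \<zeta>) * L1 i * dual_norm lay (N i) i g))"
    by (simp add: sum_negf sum_distrib_left)
  finally show ?thesis .
qed



definition qgrid :: "nat \<Rightarrow> real^'n::finite \<Rightarrow> ('n \<Rightarrow> int)" where
  "qgrid n x = (\<lambda>j. \<lfloor>real (Suc n) * x $ j\<rfloor>)"
definition qpt :: "nat \<Rightarrow> ('n::finite \<Rightarrow> int) \<Rightarrow> real^'n" where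
  "qpt n r = (\<chi> j. real_of_int (r j) / real (Suc n))"

lemma qgrid_meas: "qgrid n \<in> measurable (borel :: (real^'n::finite) measure) (count_space UNIV)"
proof -
  have "qgrid n -` {a} \<inter> space borel \<in> sets borel" for a :: "'n \<Rightarrow> int"
  proof -
    have "qgrid n -` {a} \<inter> space borel = {x::real^'n. \<forall>j. \<lfloor>real (Suc n) * x $ j\<rfloor> = a j}"
      by (auto simp: qgrid_def fun_eq_iff)
    also have "\<dots> \<in> sets borel" by measurable
    finally show ?thesis .
  qed
  then show ?thesis by (auto simp: measurable_count_space_eq2_countable)
qed

lemma qpt_lim: "(\<lambda>n. qpt n (qgrid n x)) \<longlonglongrightarrow> (x::real^'n::finite)"
proof (rule vec_tendstoI)
  fix j
  let ?c = "\<lambda>n. real (Suc n)"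
  have "(\<lambda>n. real_of_int \<lfloor>?c n * x $ j\<rfloor> / ?c n) \<longlonglongrightarrow> x $ j"
  proof (rule tendsto_sandwich[of "\<lambda>n. x $ j - 1 / ?c n" _ _ "\<lambda>n. x $ j"])
    show "\<forall>\<^sub>F n in sequentially. x $ j - 1 / ?c n \<le> real_of_int \<lfloor>?c n * x $ j\<rfloor> / ?c n"
    proof (intro always_eventually allI)
      fix n
      have "?c n * x $ j - 1 \<le> real_of_int \<lfloor>?c n * x $ j\<rfloor>" by linarith
      then have "(?c n * x $ j - 1) / ?c n \<le> real_of_int \<lfloor>?c n * x $ j\<rfloor> / ?c n"
        by (rule divide_right_mono) simp
      moreover have "(?c n * x $ j - 1) / ?c n = x $ j - 1 / ?c n"
        by (simp add: diff_divide_distrib)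
      ultimately show "x $ j - 1 / ?c n \<le> real_of_int \<lfloor>?c n * x $ j\<rfloor> / ?c n" by simp
    qed
    show "\<forall>\<^sub>F n in sequentially. real_of_int \<lfloor>?c n * x $ j\<rfloor> / ?c n \<le> x $ j"
    proof (intro always_eventually allI)
      fix n
      have "real_of_int \<lfloor>?c n * x $ j\<rfloor> \<le> ?c n * x $ j" by linarith
      then have "real_of_int \<lfloor>?c n * x $ j\<rfloor> / ?c n \<le> ?c n * x $ j / ?c n"
        by (rule divide_right_mono) simp
      then show "real_of_int \<lfloor>?c n * x $ j\<rfloor> / ?c n \<le> x $ j" by simp
    qed
    have "(\<lambda>n. 1 / ?c n) \<longlonglongrightarrow> 0"
      using LIMSEQ_Suc[OF lim_inverse_n'] by (simp add: divide_inverse)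
    then show "(\<lambda>n. x $ j - 1 / ?c n) \<longlonglongrightarrow> x $ j"
      using tendsto_diff[OF tendsto_const, of "\<lambda>n. 1 / ?c n" 0 sequentially "x $ j"] by simp
  qed simp
  then show "(\<lambda>n. qpt n (qgrid n x) $ j) \<longlonglongrightarrow> x $ j"
    by (simp add: qpt_def qgrid_def)
qed

lemma joint_meas:
  fixes gs :: "'a \<Rightarrow> real^'n::finite \<Rightarrow> 'b::metric_space"
  assumes m: "\<And>x. (\<lambda>\<xi>. gs \<xi> x) \<in> borel_measurable D"
    and c: "\<And>\<xi>. \<xi> \<in> space D \<Longrightarrow> continuous_on UNIV (gs \<xi>)"
  shows "(\<lambda>(x, \<xi>). gs \<xi> x) \<in> borel_measurable (borel \<Otimes>\<^sub>M D)"
proof (rule borel_measurable_LIMSEQ_metric)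
  fix n
  have "(\<lambda>z. gs (snd z) (qpt n (qgrid n (fst z)))) \<in> borel_measurable (borel \<Otimes>\<^sub>M D)"
  proof (rule measurable_compose_countable[where f = "\<lambda>r z. gs (snd z) (qpt n r)"])
    fix r :: "'n \<Rightarrow> int"
    show "(\<lambda>z. gs (snd z) (qpt n r)) \<in> borel_measurable (borel \<Otimes>\<^sub>M D)"
      using m by measurable
    show "(\<lambda>z. qgrid n (fst z)) \<in> measurable (borel \<Otimes>\<^sub>M D) (count_space UNIV)"
      using qgrid_meas by measurable
  qed
  then show "(\<lambda>z. gs (snd z) (qpt n (qgrid n (fst z)))) \<in> borel_measurable (borel \<Otimes>\<^sub>M D)" .
next
  fix z :: "(real^'n) \<times> 'a" assume "z \<in> space (borel \<Otimes>\<^sub>M D)"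
  then have "snd z \<in> space D" by (auto simp: space_pair_measure)
  then have "isCont (gs (snd z)) (fst z)" using c by (simp add: continuous_on_eq_continuous_at)
  then show "(\<lambda>n. gs (snd z) (qpt n (qgrid n (fst z)))) \<longlonglongrightarrow> (case z of (x, \<xi>) \<Rightarrow> gs \<xi> x)"
    using isCont_tendsto_compose[OF _ qpt_lim] by (auto split: prod.split)
qed



lemma inner_jensen:
  fixes lay :: "'n::finite \<Rightarrow> nat" and gs :: "'a \<Rightarrow> real^'n \<Rightarrow> real^'n"
  assumes nrm: "norm_on (layer_space lay i) Nf"
    and Dp: "prob_space D"
    and int: "integrable D (\<lambda>\<xi>. gs \<xi> x)" and eq: "(\<integral>\<xi>. gs \<xi> x \<partial>D) = gx"
  shows "ennreal (dual_norm lay Nf i gx) \<le> (\<integral>\<^sup>+ \<xi>. ennreal (dual_norm lay Nf i (gs \<xi> x)) \<partial>D)"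
proof -
  obtain B where B: "B \<ge> 0" "\<forall>y. dual_norm lay Nf i y \<le> B * norm y" using dual_le_norm[OF nrm] by blast
  have dm: "dual_norm lay Nf i \<in> borel_measurable borel" by (rule dual_meas[OF nrm])
  have meas: "(\<lambda>\<xi>. dual_norm lay Nf i (gs \<xi> x)) \<in> borel_measurable D"
    using measurable_comp[OF borel_measurable_integrable[OF int] dm] by (simp add: o_def)
  have int2: "integrable D (\<lambda>\<xi>. dual_norm lay Nf i (gs \<xi> x))"
  proof (rule Bochner_Integration.integrable_bound[OF _ meas])
    show "integrable D (\<lambda>\<xi>. B * norm (gs \<xi> x))" using int by (intro integrable_mult_right integrable_norm)
    show "AE \<xi> in D. norm (dual_norm lay Nf i (gs \<xi> x)) \<le> norm (B * norm (gs \<xi> x))"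
      using B dual_nonneg[OF nrm] by (auto intro!: AE_I2)
  qed
  have "dual_norm lay Nf i gx \<le> (\<integral>\<xi>. dual_norm lay Nf i (gs \<xi> x) \<partial>D)"
  proof (rule dual_least[OF nrm])
    fix z assume z: "z \<in> layer_space lay i" "Nf z \<le> 1"
    have "blk lay i gx \<bullet> z = gx \<bullet> z" by (rule blk_inner[OF z(1)])
    also have "\<dots> = (\<integral>\<xi>. gs \<xi> x \<bullet> z \<partial>D)" using eq int by simp
    also have "\<dots> \<le> (\<integral>\<xi>. dual_norm lay Nf i (gs \<xi> x) \<partial>D)"
    proof (rule integral_mono[OF _ int2])
      show "integrable D (\<lambda>\<xi>. gs \<xi> x \<bullet> z)" using int by simp
      fix \<xi>
      have "gs \<xi> x \<bullet> z = blk lay i (gs \<xi> x) \<bullet> z" using blk_inner[OF z(1)] by simp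
      also have "\<dots> \<le> dual_norm lay Nf i (gs \<xi> x) * Nf z" by (rule dual_inner[OF nrm z(1)])
      also have "\<dots> \<le> dual_norm lay Nf i (gs \<xi> x)"
        using z(2) dual_nonneg[OF nrm] by (simp add: mult_left_le)
      finally show "gs \<xi> x \<bullet> z \<le> dual_norm lay Nf i (gs \<xi> x)" .
    qed
    finally show "blk lay i gx \<bullet> z \<le> (\<integral>\<xi>. dual_norm lay Nf i (gs \<xi> x) \<partial>D)" .
  qed
  moreover have "(\<integral>\<^sup>+ \<xi>. ennreal (dual_norm lay Nf i (gs \<xi> x)) \<partial>D) = ennreal (\<integral>\<xi>. dual_norm lay Nf i (gs \<xi> x) \<partial>D)"
    by (rule nn_integral_eq_integral[OF int2]) (simp add: dual_nonneg[OF nrm])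
  ultimately show ?thesis by (simp add: ennreal_leI)
qed

lemma exp_fubini:
  fixes X :: "'w \<Rightarrow> real^'n::finite" and \<Xi> :: "'w \<Rightarrow> 'a"
  assumes Mp: "prob_space M" and Dp: "prob_space D"
    and Xm: "X \<in> borel_measurable M" and \<Xi>m: "\<Xi> \<in> measurable M D" and dist: "distr M D \<Xi> = D"
    and ind: "\<And>A B. A \<in> sets borel \<Longrightarrow> B \<in> sets D \<Longrightarrow>
       measure M ((\<lambda>\<omega>. (X \<omega>, \<Xi> \<omega>)) -` (A \<times> B) \<inter> space M)
         = measure M (X -` A \<inter> space M) * measure M (\<Xi> -` B \<inter> space M)"
    and hm: "(\<lambda>(x, \<xi>). h x \<xi>) \<in> borel_measurable (borel \<Otimes>\<^sub>M D)"
    and um: "u \<in> borel_measurable borel"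
    and le: "\<And>x. u x \<le> (\<integral>\<^sup>+ \<xi>. h x \<xi> \<partial>D)"
  shows "(\<integral>\<^sup>+ \<omega>. u (X \<omega>) \<partial>M) \<le> (\<integral>\<^sup>+ \<omega>. h (X \<omega>) (\<Xi> \<omega>) \<partial>M)"
proof -
  interpret M: prob_space M by (fact Mp)
  interpret D: prob_space D by (fact Dp)
  interpret PX: prob_space "distr M borel X" by (rule M.prob_space_distr[OF Xm])
  have pm: "(\<lambda>\<omega>. (X \<omega>, \<Xi> \<omega>)) \<in> measurable M (borel \<Otimes>\<^sub>M D)" using Xm \<Xi>m by measurable
  interpret DD: prob_space "distr M D \<Xi>" by (rule M.prob_space_distr[OF \<Xi>m])
  have joint0: "distr M borel X \<Otimes>\<^sub>M distr M D \<Xi> = distr M (borel \<Otimes>\<^sub>M D) (\<lambda>\<omega>. (X \<omega>, \<Xi> \<omega>))"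
  proof (rule pair_measure_eqI)
    show "sigma_finite_measure (distr M borel X)" ..
    show "sigma_finite_measure (distr M D \<Xi>)" ..
    fix A B assume A: "A \<in> sets (distr M borel X)" and B: "B \<in> sets (distr M D \<Xi>)"
    have "emeasure (distr M (borel \<Otimes>\<^sub>M D) (\<lambda>\<omega>. (X \<omega>, \<Xi> \<omega>))) (A \<times> B)
        = emeasure M ((\<lambda>\<omega>. (X \<omega>, \<Xi> \<omega>)) -` (A \<times> B) \<inter> space M)"
      using A B by (intro emeasure_distr[OF pm]) auto
    also have "\<dots> = emeasure M (X -` A \<inter> space M) * emeasure M (\<Xi> -` B \<inter> space M)"
      using ind[of A B] A B by (simp add: M.emeasure_eq_measure ennreal_mult)
    also have "\<dots> = emeasure (distr M borel X) A * emeasure (distr M D \<Xi>) B"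
      using A B Xm \<Xi>m by (simp add: emeasure_distr)
    finally show "emeasure (distr M borel X) A * emeasure (distr M D \<Xi>) B
        = emeasure (distr M (borel \<Otimes>\<^sub>M D) (\<lambda>\<omega>. (X \<omega>, \<Xi> \<omega>))) (A \<times> B)" by simp
  qed simp
  have joint: "distr M borel X \<Otimes>\<^sub>M D = distr M (borel \<Otimes>\<^sub>M D) (\<lambda>\<omega>. (X \<omega>, \<Xi> \<omega>))"
    using joint0 dist by simp
  have "(\<integral>\<^sup>+ \<omega>. u (X \<omega>) \<partial>M) = (\<integral>\<^sup>+ x. u x \<partial>distr M borel X)"
    by (rule nn_integral_distr[symmetric, OF Xm]) (simp add: um)
  also have "\<dots> \<le> (\<integral>\<^sup>+ x. \<integral>\<^sup>+ \<xi>. h x \<xi> \<partial>D \<partial>distr M borel X)"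
    by (intro nn_integral_mono le)
  also have "\<dots> = integral\<^sup>N (distr M borel X \<Otimes>\<^sub>M D) (\<lambda>(x, \<xi>). h x \<xi>)"
  proof -
    have "sets (distr M borel X \<Otimes>\<^sub>M D) = sets (borel \<Otimes>\<^sub>M D)"
      by (rule sets_pair_measure_cong) simp_all
    then have "(\<lambda>(x, \<xi>). h x \<xi>) \<in> borel_measurable (distr M borel X \<Otimes>\<^sub>M D)"
      using hm measurable_cong_sets by blast
    then show ?thesis using D.nn_integral_fst[of "\<lambda>(x, \<xi>). h x \<xi>" "distr M borel X"] by simp
  qed
  also have "\<dots> = integral\<^sup>N (distr M (borel \<Otimes>\<^sub>M D) (\<lambda>\<omega>. (X \<omega>, \<Xi> \<omega>))) (\<lambda>(x, \<xi>). h x \<xi>)"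
    by (simp add: joint)
  also have "\<dots> = (\<integral>\<^sup>+ \<omega>. h (X \<omega>) (\<Xi> \<omega>) \<partial>M)"
    by (subst nn_integral_distr[OF pm]) (use hm in auto)
  finally show ?thesis .
qed



lemma indep_extract:
  fixes Xs :: "nat \<Rightarrow> 'w \<Rightarrow> real^'n::finite" and \<xi> :: "nat \<Rightarrow> 'w \<Rightarrow> 'a"
  assumes Mp: "prob_space M"
    and Xs_rv: "\<forall>k. Xs k \<in> borel_measurable M"
    and xi_m: "\<forall>k. \<xi> k \<in> measurable M D"
    and ind: "prob_space.indep_set M
         {\<xi> k -` A \<inter> space M | A. A \<in> sets D}
         {(\<lambda>\<omega>. (restrict (\<lambda>j. Xs j \<omega>) {..k}, restrict (\<lambda>j. \<xi> j \<omega>) {..<k})) -` B \<inter> space M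
           | B. B \<in> sets (PiM {..k} (\<lambda>_. borel) \<Otimes>\<^sub>M PiM {..<k} (\<lambda>_. D))}"
    and A: "A \<in> sets borel" and B: "B \<in> sets D"
  shows "measure M ((\<lambda>\<omega>. (Xs k \<omega>, \<xi> k \<omega>)) -` (A \<times> B) \<inter> space M)
         = measure M (Xs k -` A \<inter> space M) * measure M (\<xi> k -` B \<inter> space M)"
proof -
  interpret M: prob_space M by (fact Mp)
  let ?P = "PiM {..k} (\<lambda>_. borel :: (real^'n) measure) \<Otimes>\<^sub>M PiM {..<k} (\<lambda>_. D)"
  let ?h = "\<lambda>\<omega>. (restrict (\<lambda>j. Xs j \<omega>) {..k}, restrict (\<lambda>j. \<xi> j \<omega>) {..<k})"
  have hm: "?h \<in> measurable M ?P"
    by (intro measurable_Pair measurable_restrict) (use Xs_rv xi_m in auto)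
  have cm: "(\<lambda>z. fst z k) \<in> measurable ?P (borel :: (real^'n) measure)"
    by (rule measurable_compose[OF measurable_fst measurable_component_singleton]) simp
  let ?S = "(\<lambda>z. fst z k) -` A \<inter> space ?P"
  have S: "?S \<in> sets ?P" using cm A by (rule measurable_sets)
  have sp: "\<And>\<omega>. \<omega> \<in> space M \<Longrightarrow> ?h \<omega> \<in> space ?P" using measurable_space[OF hm] by blast
  have eq: "?h -` ?S \<inter> space M = Xs k -` A \<inter> space M"
  proof (intro set_eqI)
    fix \<omega>
    show "\<omega> \<in> ?h -` ?S \<inter> space M \<longleftrightarrow> \<omega> \<in> Xs k -` A \<inter> space M"
    proof (cases "\<omega> \<in> space M")
      case True
      then show ?thesis using sp[OF True] by (simp only: Int_iff vimage_eq fst_conv restrict_apply' atMost_iff order_refl simp_thms)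
    qed simp
  qed
  have b: "Xs k -` A \<inter> space M \<in> {?h -` B \<inter> space M | B. B \<in> sets ?P}"
    unfolding mem_Collect_eq by (rule exI[of _ ?S]) (use S eq in simp)
  have a: "\<xi> k -` B \<inter> space M \<in> {\<xi> k -` A \<inter> space M | A. A \<in> sets D}" using B by blast
  have "M.prob ((\<xi> k -` B \<inter> space M) \<inter> (Xs k -` A \<inter> space M))
      = M.prob (\<xi> k -` B \<inter> space M) * M.prob (Xs k -` A \<inter> space M)"
    using M.indep_sets2_eq[THEN iffD1, OF ind] a b by (elim conjE) (drule bspec, assumption, drule bspec, assumption, assumption)
  moreover have "(\<lambda>\<omega>. (Xs k \<omega>, \<xi> k \<omega>)) -` (A \<times> B) \<inter> space M = (\<xi> k -` B \<inter> space M) \<inter> (Xs k -` A \<inter> space M)"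
    by blast
  ultimately show ?thesis by (simp add: mult.commute)
qed



lemma tangent_ineq:
  fixes a b l x :: real
  assumes "a \<ge> 0" "b \<ge> 0" "x \<ge> 0" "x \<noteq> 0 \<longrightarrow> a + b * x \<noteq> 0"
  shows "(2 * l - l\<^sup>2 * b) * x \<le> x\<^sup>2 / (a + b * x) + l\<^sup>2 * a"
proof (cases "x = 0")
  case True then show ?thesis using assms by simp
next
  case False
  define d where "d = a + b * x"
  have d: "d > 0" using assms False unfolding d_def
    by (metis add_nonneg_nonneg less_eq_real_def mult_nonneg_nonneg)
  have "0 \<le> (x - l * d)\<^sup>2" by simp
  then have "2 * l * x * d - l\<^sup>2 * d * d \<le> x\<^sup>2" by (simp add: power2_eq_square algebra_simps)
  then have "(2 * l * x * d - l\<^sup>2 * d * d) / d \<le> x\<^sup>2 / d" using d by (simp add: divide_right_mono)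
  moreover have "(2 * l * x * d - l\<^sup>2 * d * d) / d = 2 * l * x - l\<^sup>2 * d" using d by (simp add: field_simps)
  ultimately have "2 * l * x - l\<^sup>2 * d \<le> x\<^sup>2 / d" by simp
  then show ?thesis unfolding d_def by (simp add: algebra_simps)
qed

lemma arith_choice:
  fixes u A \<beta> Q \<mu> :: real and K :: nat
  assumes u: "u > 0" and A: "A \<ge> 0" and \<beta>: "\<beta> \<ge> 0" and d: "A + \<beta> * u > 0"
    and KQ: "real K \<ge> Q * A / u\<^sup>2 + Q * \<beta> / u"
    and \<mu>: "\<mu> = u / (A + \<beta> * u)"
  shows "Q + real K * (\<mu>\<^sup>2 * A) \<le> real K * ((2 * \<mu> - \<mu>\<^sup>2 * \<beta>) * u)"
    and "2 * \<mu> - \<mu>\<^sup>2 * \<beta> > 0" and "\<mu> \<ge> 0"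
proof -
  define d where "d = A + \<beta> * u"
  have d0: "d > 0" using d d_def by simp
  have md: "\<mu> * d = u" unfolding \<mu> d_def using d by simp
  have "(2 * \<mu> - \<mu>\<^sup>2 * \<beta>) * u - \<mu>\<^sup>2 * A = 2 * \<mu> * u - \<mu> * (\<mu> * d)"
    unfolding d_def by (simp add: power2_eq_square algebra_simps)
  also have "\<dots> = \<mu> * u" using md by simp
  also have "\<dots> = u\<^sup>2 / d" unfolding \<mu> d_def by (simp add: power2_eq_square)
  finally have key: "(2 * \<mu> - \<mu>\<^sup>2 * \<beta>) * u - \<mu>\<^sup>2 * A = u\<^sup>2 / d" .
  have "Q * A / u\<^sup>2 + Q * \<beta> / u = Q * d / u\<^sup>2" using u unfolding d_def by (simp add: field_simps power2_eq_square)
  then have "real K \<ge> Q * d / u\<^sup>2" using KQ by simp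
  then have "real K * (u\<^sup>2 / d) \<ge> Q * d / u\<^sup>2 * (u\<^sup>2 / d)" using d0 by (intro mult_right_mono) auto
  also have "Q * d / u\<^sup>2 * (u\<^sup>2 / d) = Q" using d0 u by (simp add: field_simps)
  finally have "Q \<le> real K * (u\<^sup>2 / d)" .
  then show "Q + real K * (\<mu>\<^sup>2 * A) \<le> real K * ((2 * \<mu> - \<mu>\<^sup>2 * \<beta>) * u)"
    using key by (simp add: algebra_simps)
  show "\<mu> \<ge> 0" unfolding \<mu> using u d by simp
  have ud: "u / d = \<mu>" unfolding \<mu> d_def by simp
  have "\<mu> * (2 * A + \<beta> * u) / d = \<mu> * (2 * d - \<beta> * u) / d" unfolding d_def by simp
  also have "\<dots> = 2 * \<mu> - \<mu> * \<beta> * (u / d)" using d0 by (simp add: field_simps)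
  also have "\<dots> = 2 * \<mu> - \<mu>\<^sup>2 * \<beta>" unfolding ud by (simp add: power2_eq_square)
  finally have "2 * \<mu> - \<mu>\<^sup>2 * \<beta> = \<mu> * (2 * A + \<beta> * u) / d" ..
  moreover have "\<mu> > 0" unfolding \<mu> using u d by simp
  moreover have "2 * A + \<beta> * u > 0" using A d by linarith
  ultimately show "2 * \<mu> - \<mu>\<^sup>2 * \<beta> > 0" using d0 by simp
qed

lemma final_bound:
  fixes S E :: "nat \<Rightarrow> ennreal" and c r Q \<epsilon> :: real and K :: nat
  assumes K: "K \<ge> 1" and c: "c > 0" and r: "r \<ge> 0" and Q: "Q \<ge> 0" and eps: "\<epsilon> \<ge> 0"
    and step: "\<And>k. k < K \<Longrightarrow> ennreal c * S k \<le> E k + ennreal r"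
    and tot: "(\<Sum>k<K. E k) \<le> ennreal Q"
    and ar: "Q + real K * r \<le> real K * c * \<epsilon>"
  shows "Min (S ` {..<K}) \<le> ennreal \<epsilon>"
proof -
  define m where "m = Min (S ` {..<K})"
  have "0 \<in> {..<K}" using K by simp
  then have ne: "{..<K} \<noteq> {}" by blast
  have mle: "m \<le> S k" if "k < K" for k unfolding m_def using that by (intro Min_le) auto
  have "(\<Sum>k<K. ennreal c * m) \<le> (\<Sum>k<K. E k + ennreal r)"
    by (intro sum_mono order_trans[OF mult_left_mono[OF mle] step]) auto
  also have "\<dots> = (\<Sum>k<K. E k) + of_nat K * ennreal r" by (simp add: sum.distrib)
  also have "\<dots> \<le> ennreal Q + ennreal (real K * r)"
    using tot by (intro add_mono) (auto simp: ennreal_of_nat_eq_real_of_nat ennreal_mult r)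
  also have "\<dots> = ennreal (Q + real K * r)" using Q r by simp
  also have "\<dots> \<le> ennreal (real K * c * \<epsilon>)" using ar by (rule ennreal_leI)
  finally have "ennreal (real K * c) * m \<le> ennreal (real K * c) * ennreal \<epsilon>"
    using c eps by (simp add: ennreal_of_nat_eq_real_of_nat ennreal_mult mult.assoc)
  moreover have "ennreal (real K * c) \<noteq> 0" using K c by simp
  ultimately have "m \<le> ennreal \<epsilon>" using ennreal_mult_le_mult_iff by auto
  then show ?thesis unfolding m_def .
qed


theorem theorem5:
  fixes lay :: "'n::finite \<Rightarrow> nat" and p :: nat
    and N :: "nat \<Rightarrow> real^'n \<Rightarrow> real"
    and D :: "'a measure"
    and fs :: "'a \<Rightarrow> real^'n \<Rightarrow> real" and gs :: "'a \<Rightarrow> real^'n \<Rightarrow> real^'n"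
    and f :: "real^'n \<Rightarrow> real" and gF :: "real^'n \<Rightarrow> real^'n"
    and L0 L1 :: "nat \<Rightarrow> real" and \<zeta> \<epsilon> :: real
    and M :: "'w measure" and \<xi> :: "nat \<Rightarrow> 'w \<Rightarrow> 'a" and Xs :: "nat \<Rightarrow> 'w \<Rightarrow> real^'n"
    and X0 :: "real^'n"
  assumes p_pos: "p \<ge> 1"
    and lay_range: "\<forall>k. lay k < p"
    and norms: "\<forall>i<p. norm_on (layer_space lay i) (N i)"
    and D_prob: "prob_space D"
    and fs_C1: "\<forall>\<xi>\<in>space D. (\<forall>X. (fs \<xi> has_derivative (\<lambda>h. gs \<xi> X \<bullet> h)) (at X))
                                 \<and> continuous_on UNIV (gs \<xi>)"
    and f_expect: "\<forall>X. integrable D (\<lambda>\<xi>. fs \<xi> X) \<and> f X = (\<integral>\<xi>. fs \<xi> X \<partial>D)"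
    and f_grad: "\<forall>X. (f has_derivative (\<lambda>h. gF X \<bullet> h)) (at X)"
    and f_bdd: "bdd_below (range f)"
    and L_nonneg: "\<forall>i<p. 0 \<le> L0 i \<and> 0 \<le> L1 i"
    and smooth: "layerwise_L0L1_smooth lay p N L0 L1 gF"
    and unbiased: "\<forall>X. integrable D (\<lambda>\<xi>. gs \<xi> X) \<and> (\<integral>\<xi>. gs \<xi> X \<partial>D) = gF X"
    and zeta: "0 \<le> \<zeta>" "\<zeta> < 1"
    and rel_var: "AE \<xi>' in D. \<forall>X. \<forall>i<p.
         dual_norm lay (N i) i (gs \<xi>' X - gF X) \<le> \<zeta> * dual_norm lay (N i) i (gs \<xi>' X)"
    and eps: "\<epsilon> > 0"
    and M_prob: "prob_space M"
    and xi_rv: "\<forall>k. \<xi> k \<in> measurable M D \<and> distr M D (\<xi> k) = D"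
    and Xs_rv: "\<forall>k. Xs k \<in> borel_measurable M"
    and xi_indep: "\<forall>k. prob_space.indep_set M
         {\<xi> k -` A \<inter> space M | A. A \<in> sets D}
         {(\<lambda>\<omega>. (restrict (\<lambda>j. Xs j \<omega>) {..k}, restrict (\<lambda>j. \<xi> j \<omega>) {..<k})) -` B \<inter> space M
           | B. B \<in> sets (PiM {..k} (\<lambda>_. borel) \<Otimes>\<^sub>M PiM {..<k} (\<lambda>_. D))}"
    and X_init: "\<forall>\<omega>\<in>space M. Xs 0 \<omega> = X0"
    and well_def: "\<forall>k. \<forall>\<omega>\<in>space M. \<forall>i<p.
         dual_norm lay (N i) i (gs (\<xi> k \<omega>) (Xs k \<omega>)) \<noteq> 0 \<longrightarrow>
         L0 i + (1 + \<zeta>) * L1 i * dual_norm lay (N i) i (gs (\<xi> k \<omega>) (Xs k \<omega>)) \<noteq> 0"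
    and gluon: "\<forall>k. \<forall>\<omega>\<in>space M. \<forall>i<p.
         lmo_step lay (N i) i (gs (\<xi> k \<omega>) (Xs k \<omega>)) (Xs k \<omega>)
           ((1 - \<zeta>) * dual_norm lay (N i) i (gs (\<xi> k \<omega>) (Xs k \<omega>))
             / (L0 i + (1 + \<zeta>) * L1 i * dual_norm lay (N i) i (gs (\<xi> k \<omega>) (Xs k \<omega>))))
           (Xs (Suc k) \<omega>)"
  shows
    "(let \<Delta>0 = f X0 - Inf (range f);
          L1max = Max (L1 ` {..<p});
          K = nat \<lceil>2 * \<Delta>0 * (\<Sum>i<p. L0 i) / ((1 - \<zeta>)\<^sup>2 * \<epsilon>\<^sup>2)
                   + 2 * (1 + \<zeta>) * L1max * \<Delta>0 / ((1 - \<zeta>)\<^sup>2 * \<epsilon>)\<rceil>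
      in K \<ge> 1 \<longrightarrow>
         Min ((\<lambda>k. \<Sum>i<p. \<integral>\<^sup>+ \<omega>. ennreal (dual_norm lay (N i) i (gF (Xs k \<omega>))) \<partial>M) ` {..<K})
           \<le> ennreal \<epsilon>)
   \<and> ((\<forall>i<p. L1 i > 0) \<longrightarrow>
      (let \<Delta>0 = f X0 - Inf (range f);
           H = (1 / real p) * (\<Sum>j<p. 1 / L1 j);
           K = nat \<lceil>2 * \<Delta>0 * (\<Sum>i<p. L0 i / (L1 i)\<^sup>2) / (\<epsilon>\<^sup>2 * (1 - \<zeta>)\<^sup>2 * H\<^sup>2)
                    + 2 * \<Delta>0 * (1 + \<zeta>) / (\<epsilon> * (1 - \<zeta>)\<^sup>2 * H)\<rceil>
       in K \<ge> 1 \<longrightarrow>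
          Min ((\<lambda>k. \<Sum>i<p. ennreal ((1 / L1 i) / H) *
                  \<integral>\<^sup>+ \<omega>. ennreal (dual_norm lay (N i) i (gF (Xs k \<omega>))) \<partial>M) ` {..<K})
            \<le> ennreal \<epsilon>))"

proof -
  interpret M: prob_space M by (fact M_prob)
  interpret D: prob_space D by (fact D_prob)
  define x where "x i k \<omega> = dual_norm lay (N i) i (gs (\<xi> k \<omega>) (Xs k \<omega>))" for i k \<omega>
  define y where "y i k \<omega> = dual_norm lay (N i) i (gF (Xs k \<omega>))" for i k \<omega>
  define \<phi> where "\<phi> i s = s\<^sup>2 / (L0 i + (1 + \<zeta>) * L1 i * s)" for i s
  define \<Phi> where "\<Phi> k \<omega> = (\<Sum>i<p. \<phi> i (x i k \<omega>))" for k \<omega>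
  define E where "E k = (\<integral>\<^sup>+ \<omega>. ennreal (\<Phi> k \<omega>) \<partial>M)" for k
  define \<Delta>0 where "\<Delta>0 = f X0 - Inf (range f)"
  define Q where "Q = 2 * \<Delta>0 / (1 - \<zeta>)\<^sup>2"
  have \<Delta>0: "\<Delta>0 \<ge> 0" unfolding \<Delta>0_def using cInf_lower[OF _ f_bdd, of "f X0"] by simp
  have Q0: "Q \<ge> 0" unfolding Q_def using \<Delta>0 by simp
  have gsD: "(\<lambda>\<xi>. gs \<xi> X) \<in> borel_measurable D" for X
    using unbiased by (auto intro: borel_measurable_integrable)
  have gsm: "(\<lambda>(X, \<xi>). gs \<xi> X) \<in> borel_measurable (borel \<Otimes>\<^sub>M D)"
    by (rule joint_meas[OF gsD]) (use fs_C1 in auto)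
  have gFm: "gF \<in> borel_measurable borel"
  proof -
    have "(\<lambda>X. \<integral>\<xi>. gs \<xi> X \<partial>D) \<in> borel_measurable borel"
      using D.borel_measurable_lebesgue_integral[of "\<lambda>X \<xi>. gs \<xi> X" borel] gsm by simp
    moreover have "(\<lambda>X. \<integral>\<xi>. gs \<xi> X \<partial>D) = gF" using unbiased by auto
    ultimately show ?thesis by simp
  qed
  have nrm: "norm_on (layer_space lay i) (N i)" if "i < p" for i using norms that by auto
  have dm: "dual_norm lay (N i) i \<in> borel_measurable borel" if "i < p" for i
    by (rule dual_meas[OF nrm[OF that]])
  have pm: "(\<lambda>\<omega>. (Xs k \<omega>, \<xi> k \<omega>)) \<in> measurable M (borel \<Otimes>\<^sub>M D)" for k
    using Xs_rv xi_rv by (auto intro!: measurable_Pair)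
  have hm: "(\<lambda>(X, \<xi>). dual_norm lay (N i) i (gs \<xi> X)) \<in> borel_measurable (borel \<Otimes>\<^sub>M D)" if "i < p" for i
    using measurable_compose[OF gsm dm[OF that]] by (simp add: case_prod_beta')
  have xm: "(\<lambda>\<omega>. x i k \<omega>) \<in> borel_measurable M" if "i < p" for i k
    using measurable_compose[OF pm hm[OF that]] unfolding x_def by simp
  have ym: "(\<lambda>\<omega>. y i k \<omega>) \<in> borel_measurable M" if "i < p" for i k
    using measurable_compose[OF measurable_compose[OF _ gFm] dm[OF that], of "Xs k" M] Xs_rv
    unfolding y_def by (simp add: o_def)
  have x0: "x i k \<omega> \<ge> 0" if "i < p" for i k \<omega> unfolding x_def by (rule dual_nonneg[OF nrm[OF that]])
  have y0: "y i k \<omega> \<ge> 0" if "i < p" for i k \<omega> unfolding y_def by (rule dual_nonneg[OF nrm[OF that]])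
  have \<phi>0: "\<phi> i s \<ge> 0" if "i < p" "s \<ge> 0" for i s
    unfolding \<phi>_def using L_nonneg that zeta by simp
  have \<phi>m: "(\<lambda>\<omega>. \<phi> i (x i k \<omega>)) \<in> borel_measurable M" if "i < p" for i k
    unfolding \<phi>_def using xm[OF that] by measurable
  have \<Phi>0: "\<Phi> k \<omega> \<ge> 0" for k \<omega> unfolding \<Phi>_def by (intro sum_nonneg) (use \<phi>0 x0 in auto)
  have \<Phi>m: "(\<lambda>\<omega>. \<Phi> k \<omega>) \<in> borel_measurable M" for k
    unfolding \<Phi>_def by (rule borel_measurable_sum) (use \<phi>m in auto)
  have expB: "(\<integral>\<^sup>+ \<omega>. ennreal (y i k \<omega>) \<partial>M) \<le> (\<integral>\<^sup>+ \<omega>. ennreal (x i k \<omega>) \<partial>M)" if i: "i < p" for i k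
  proof -
    have "(\<integral>\<^sup>+ \<omega>. ennreal (dual_norm lay (N i) i (gF (Xs k \<omega>))) \<partial>M)
        \<le> (\<integral>\<^sup>+ \<omega>. ennreal (dual_norm lay (N i) i (gs (\<xi> k \<omega>) (Xs k \<omega>))) \<partial>M)"
    proof (rule exp_fubini[OF M_prob D_prob, where h = "\<lambda>X \<xi>. ennreal (dual_norm lay (N i) i (gs \<xi> X))"
          and u = "\<lambda>X. ennreal (dual_norm lay (N i) i (gF X))"])
      show "Xs k \<in> borel_measurable M" using Xs_rv by auto
      show "\<xi> k \<in> measurable M D" "distr M D (\<xi> k) = D" using xi_rv by auto
      show "measure M ((\<lambda>\<omega>. (Xs k \<omega>, \<xi> k \<omega>)) -` (A \<times> B) \<inter> space M) =
          measure M (Xs k -` A \<inter> space M) * measure M (\<xi> k -` B \<inter> space M)"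
        if "A \<in> sets borel" "B \<in> sets D" for A B
        by (rule indep_extract[OF M_prob Xs_rv _ _ that]) (use xi_rv xi_indep in auto)
      show "(\<lambda>(X, \<xi>). ennreal (dual_norm lay (N i) i (gs \<xi> X))) \<in> borel_measurable (borel \<Otimes>\<^sub>M D)"
        using hm[OF i] by (simp add: case_prod_beta')
      show "(\<lambda>X. ennreal (dual_norm lay (N i) i (gF X))) \<in> borel_measurable borel"
        using measurable_compose[OF gFm dm[OF i]] by simp
      show "ennreal (dual_norm lay (N i) i (gF X)) \<le> (\<integral>\<^sup>+ \<xi>. ennreal (dual_norm lay (N i) i (gs \<xi> X)) \<partial>D)" for X
        by (rule inner_jensen[OF nrm[OF i] D_prob]) (use unbiased in auto)
    qed
    then show ?thesis unfolding x_def y_def .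
  qed
  have AEstep: "AE \<omega> in M. \<forall>k. \<forall>i<p. dual_norm lay (N i) i (gs (\<xi> k \<omega>) (Xs k \<omega>) - gF (Xs k \<omega>))
        \<le> \<zeta> * dual_norm lay (N i) i (gs (\<xi> k \<omega>) (Xs k \<omega>))"
  proof (subst AE_all_countable, intro allI)
    fix k
    have dk: "distr M D (\<xi> k) = D" using xi_rv by blast
    have "AE \<xi>' in distr M D (\<xi> k). \<forall>X. \<forall>i<p.
         dual_norm lay (N i) i (gs \<xi>' X - gF X) \<le> \<zeta> * dual_norm lay (N i) i (gs \<xi>' X)"
      unfolding dk by (rule rel_var)
    from AE_distrD[OF _ this] xi_rv show "AE \<omega> in M. \<forall>i<p. dual_norm lay (N i) i (gs (\<xi> k \<omega>) (Xs k \<omega>) - gF (Xs k \<omega>))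
        \<le> \<zeta> * dual_norm lay (N i) i (gs (\<xi> k \<omega>) (Xs k \<omega>))" by auto
  qed
  have pw: "AE \<omega> in M. (\<Sum>k<K. \<Phi> k \<omega>) \<le> Q" for K
    using AEstep AE_space
  proof eventually_elim
    case (elim \<omega>)
    have dec: "f (Xs (Suc k) \<omega>) \<le> f (Xs k \<omega>) - (1 - \<zeta>)\<^sup>2 / 2 * \<Phi> k \<omega>" for k
    proof -
      have "f (Xs (Suc k) \<omega>) \<le> f (Xs k \<omega>) - (1 - \<zeta>)\<^sup>2 / 2 * (\<Sum>i<p. (dual_norm lay (N i) i (gs (\<xi> k \<omega>) (Xs k \<omega>)))\<^sup>2
                 / (L0 i + (1 + \<zeta>) * L1 i * dual_norm lay (N i) i (gs (\<xi> k \<omega>) (Xs k \<omega>))))"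
        by (rule step_decrease[OF lay_range norms f_grad smooth L_nonneg zeta])
           (use elim well_def gluon in auto)
      then show ?thesis unfolding \<Phi>_def \<phi>_def x_def .
    qed
    have tel: "f (Xs K \<omega>) \<le> f (Xs 0 \<omega>) - (1 - \<zeta>)\<^sup>2 / 2 * (\<Sum>k<K. \<Phi> k \<omega>)" for K
    proof (induction K)
      case 0 then show ?case by simp
    next
      case (Suc K)
      have "(1 - \<zeta>)\<^sup>2 / 2 * (\<Sum>k<Suc K. \<Phi> k \<omega>) = (1 - \<zeta>)\<^sup>2 / 2 * (\<Sum>k<K. \<Phi> k \<omega>) + (1 - \<zeta>)\<^sup>2 / 2 * \<Phi> K \<omega>"
        by (simp add: distrib_left)
      then show ?case using dec[of K] Suc.IH by linarith
    qed
    have "Inf (range f) \<le> f (Xs K \<omega>)" by (rule cInf_lower[OF _ f_bdd]) simp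
    then have "(1 - \<zeta>)\<^sup>2 / 2 * (\<Sum>k<K. \<Phi> k \<omega>) \<le> \<Delta>0"
      using tel[of K] X_init elim unfolding \<Delta>0_def by auto
    then show ?case unfolding Q_def using zeta by (simp add: field_simps)
  qed
  have totE: "(\<Sum>k<K. E k) \<le> ennreal Q" for K
  proof -
    have "(\<Sum>k<K. E k) = (\<integral>\<^sup>+ \<omega>. (\<Sum>k<K. ennreal (\<Phi> k \<omega>)) \<partial>M)"
      unfolding E_def by (rule nn_integral_sum[symmetric]) (use \<Phi>m in simp)
    also have "\<dots> = (\<integral>\<^sup>+ \<omega>. ennreal (\<Sum>k<K. \<Phi> k \<omega>) \<partial>M)"
      using \<Phi>0 by simp
    also have "\<dots> \<le> (\<integral>\<^sup>+ \<omega>. ennreal Q \<partial>M)"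
      by (rule nn_integral_mono_AE) (use pw[of K] in \<open>auto intro: ennreal_leI\<close>)
    also have "\<dots> = ennreal Q" by (simp add: M.emeasure_space_1)
    finally show ?thesis .
  qed
  have stepG: "(\<Sum>i<p. ennreal (2 * lam i - (lam i)\<^sup>2 * ((1 + \<zeta>) * L1 i)) * (\<integral>\<^sup>+ \<omega>. ennreal (y i k \<omega>) \<partial>M))
      \<le> E k + ennreal (\<Sum>i<p. (lam i)\<^sup>2 * L0 i)" for lam k
  proof -
    have each: "ennreal (2 * lam i - (lam i)\<^sup>2 * ((1 + \<zeta>) * L1 i)) * (\<integral>\<^sup>+ \<omega>. ennreal (y i k \<omega>) \<partial>M)
        \<le> (\<integral>\<^sup>+ \<omega>. ennreal (\<phi> i (x i k \<omega>)) \<partial>M) + ennreal ((lam i)\<^sup>2 * L0 i)" if i: "i < p" for i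
    proof -
      define c where "c = 2 * lam i - (lam i)\<^sup>2 * ((1 + \<zeta>) * L1 i)"
      have "ennreal c * (\<integral>\<^sup>+ \<omega>. ennreal (y i k \<omega>) \<partial>M) \<le> ennreal c * (\<integral>\<^sup>+ \<omega>. ennreal (x i k \<omega>) \<partial>M)"
        by (rule mult_left_mono[OF expB[OF i]]) simp
      also have "\<dots> = (\<integral>\<^sup>+ \<omega>. ennreal c * ennreal (x i k \<omega>) \<partial>M)"
        by (rule nn_integral_cmult[symmetric]) (use xm[OF i] in simp)
      also have "\<dots> \<le> (\<integral>\<^sup>+ \<omega>. ennreal (\<phi> i (x i k \<omega>)) + ennreal ((lam i)\<^sup>2 * L0 i) \<partial>M)"
      proof (rule nn_integral_mono)
        fix \<omega> assume \<omega>: "\<omega> \<in> space M"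
        have tg: "c * x i k \<omega> \<le> \<phi> i (x i k \<omega>) + (lam i)\<^sup>2 * L0 i"
          unfolding c_def \<phi>_def
          using tangent_ineq[of "L0 i" "(1 + \<zeta>) * L1 i" "x i k \<omega>" "lam i"] L_nonneg i zeta x0[OF i, of k \<omega>]
            well_def \<omega> unfolding x_def by (auto simp: mult.assoc)
        have r0: "0 \<le> (lam i)\<^sup>2 * L0 i" using L_nonneg i by simp
        show "ennreal c * ennreal (x i k \<omega>) \<le> ennreal (\<phi> i (x i k \<omega>)) + ennreal ((lam i)\<^sup>2 * L0 i)"
        proof (cases "c \<ge> 0")
          case True
          have "ennreal c * ennreal (x i k \<omega>) = ennreal (c * x i k \<omega>)" by (rule ennreal_mult'[OF True, symmetric])
          also have "\<dots> \<le> ennreal (\<phi> i (x i k \<omega>) + (lam i)\<^sup>2 * L0 i)" using tg by (rule ennreal_leI)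
          also have "\<dots> = ennreal (\<phi> i (x i k \<omega>)) + ennreal ((lam i)\<^sup>2 * L0 i)"
            using \<phi>0[OF i x0[OF i]] r0 by simp
          finally show ?thesis .
        next
          case False
          then show ?thesis by (simp add: ennreal_neg)
        qed
      qed
      also have "\<dots> = (\<integral>\<^sup>+ \<omega>. ennreal (\<phi> i (x i k \<omega>)) \<partial>M) + ennreal ((lam i)\<^sup>2 * L0 i)"
        by (subst nn_integral_add) (use \<phi>m[OF i] in \<open>auto simp: M.emeasure_space_1\<close>)
      finally show ?thesis unfolding c_def .
    qed
    have "(\<Sum>i<p. ennreal (2 * lam i - (lam i)\<^sup>2 * ((1 + \<zeta>) * L1 i)) * (\<integral>\<^sup>+ \<omega>. ennreal (y i k \<omega>) \<partial>M))
        \<le> (\<Sum>i<p. (\<integral>\<^sup>+ \<omega>. ennreal (\<phi> i (x i k \<omega>)) \<partial>M) + ennreal ((lam i)\<^sup>2 * L0 i))"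
      by (rule sum_mono) (use each in simp)
    also have "\<dots> = (\<Sum>i<p. (\<integral>\<^sup>+ \<omega>. ennreal (\<phi> i (x i k \<omega>)) \<partial>M)) + (\<Sum>i<p. ennreal ((lam i)\<^sup>2 * L0 i))"
      by (rule sum.distrib)
    also have "(\<Sum>i<p. (\<integral>\<^sup>+ \<omega>. ennreal (\<phi> i (x i k \<omega>)) \<partial>M)) = (\<integral>\<^sup>+ \<omega>. (\<Sum>i<p. ennreal (\<phi> i (x i k \<omega>))) \<partial>M)"
      by (rule nn_integral_sum[symmetric]) (use \<phi>m in simp)
    also have "\<dots> = E k"
      unfolding E_def \<Phi>_def by (intro nn_integral_cong sum_ennreal) (use \<phi>0 x0 in auto)
    also have "(\<Sum>i<p. ennreal ((lam i)\<^sup>2 * L0 i)) = ennreal (\<Sum>i<p. (lam i)\<^sup>2 * L0 i)"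
      by (rule sum_ennreal) (use L_nonneg in simp)
    finally show ?thesis .
  qed
  have p0: "0 \<in> {..<p}" using p_pos by simp
  define A where "A = (\<Sum>i<p. L0 i)"
  define L1max where "L1max = Max (L1 ` {..<p})"
  define K1 where "K1 = nat \<lceil>2 * \<Delta>0 * A / ((1 - \<zeta>)\<^sup>2 * \<epsilon>\<^sup>2) + 2 * (1 + \<zeta>) * L1max * \<Delta>0 / ((1 - \<zeta>)\<^sup>2 * \<epsilon>)\<rceil>"
  have P1: "K1 \<ge> 1 \<longrightarrow> Min ((\<lambda>k. \<Sum>i<p. \<integral>\<^sup>+ \<omega>. ennreal (y i k \<omega>) \<partial>M) ` {..<K1}) \<le> ennreal \<epsilon>"
  proof
    assume K1: "K1 \<ge> 1"
    define \<beta> where "\<beta> = (1 + \<zeta>) * L1max"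
    have L1le: "L1 i \<le> L1max" if "i < p" for i unfolding L1max_def using that by (intro Max_ge) auto
    have L1max0: "L1max \<ge> 0" using L1le[of 0] L_nonneg p_pos by force
    have A0: "A \<ge> 0" unfolding A_def by (intro sum_nonneg) (use L_nonneg in auto)
    have \<beta>0: "\<beta> \<ge> 0" unfolding \<beta>_def using L1max0 zeta by simp
    have veq: "2 * \<Delta>0 * A / ((1 - \<zeta>)\<^sup>2 * \<epsilon>\<^sup>2) + 2 * (1 + \<zeta>) * L1max * \<Delta>0 / ((1 - \<zeta>)\<^sup>2 * \<epsilon>)
        = Q * A / \<epsilon>\<^sup>2 + Q * \<beta> / \<epsilon>"
      unfolding Q_def \<beta>_def by (simp add: field_simps)
    have Kge: "real K1 \<ge> Q * A / \<epsilon>\<^sup>2 + Q * \<beta> / \<epsilon>"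
      unfolding K1_def veq[symmetric] by (rule real_nat_ceiling_ge)
    have d: "A + \<beta> * \<epsilon> > 0"
    proof (rule ccontr)
      assume "\<not> A + \<beta> * \<epsilon> > 0"
      moreover have "\<beta> * \<epsilon> \<ge> 0" using \<beta>0 eps by simp
      ultimately have "A = 0" "\<beta> * \<epsilon> = 0" using A0 by linarith+
      then have "A = 0" "\<beta> = 0" using eps by auto
      then have "K1 = 0" unfolding K1_def veq by simp
      with K1 show False by simp
    qed
    define \<mu> where "\<mu> = \<epsilon> / (A + \<beta> * \<epsilon>)"
    note ac = arith_choice[OF eps A0 \<beta>0 d Kge \<mu>_def]
    show "Min ((\<lambda>k. \<Sum>i<p. \<integral>\<^sup>+ \<omega>. ennreal (y i k \<omega>) \<partial>M) ` {..<K1}) \<le> ennreal \<epsilon>"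
    proof (rule final_bound[OF K1 ac(2), where r = "\<mu>\<^sup>2 * A" and Q = Q and E = E])
      show "0 \<le> \<mu>\<^sup>2 * A" using A0 by simp
      show "0 \<le> Q" by (fact Q0)
      show "0 \<le> \<epsilon>" using eps by simp
      show "(\<Sum>k<K1. E k) \<le> ennreal Q" by (rule totE)
      show "Q + real K1 * (\<mu>\<^sup>2 * A) \<le> real K1 * (2 * \<mu> - \<mu>\<^sup>2 * \<beta>) * \<epsilon>"
        using ac(1) by (simp add: mult.assoc)
      fix k
      have "ennreal (2 * \<mu> - \<mu>\<^sup>2 * \<beta>) * (\<Sum>i<p. \<integral>\<^sup>+ \<omega>. ennreal (y i k \<omega>) \<partial>M)
          = (\<Sum>i<p. ennreal (2 * \<mu> - \<mu>\<^sup>2 * \<beta>) * (\<integral>\<^sup>+ \<omega>. ennreal (y i k \<omega>) \<partial>M))"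
        by (rule sum_distrib_left)
      also have "\<dots> \<le> (\<Sum>i<p. ennreal (2 * \<mu> - \<mu>\<^sup>2 * ((1 + \<zeta>) * L1 i)) * (\<integral>\<^sup>+ \<omega>. ennreal (y i k \<omega>) \<partial>M))"
      proof (rule sum_mono, rule mult_right_mono, rule ennreal_leI)
        fix i assume "i \<in> {..<p}"
        then have "(1 + \<zeta>) * L1 i \<le> \<beta>" unfolding \<beta>_def using L1le zeta by (intro mult_left_mono) auto
        then have "\<mu>\<^sup>2 * ((1 + \<zeta>) * L1 i) \<le> \<mu>\<^sup>2 * \<beta>" by (intro mult_left_mono) auto
        then show "2 * \<mu> - \<mu>\<^sup>2 * \<beta> \<le> 2 * \<mu> - \<mu>\<^sup>2 * ((1 + \<zeta>) * L1 i)" by simp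
      qed simp
      also have "\<dots> \<le> E k + ennreal (\<Sum>i<p. \<mu>\<^sup>2 * L0 i)"
        using stepG[of "\<lambda>_. \<mu>" k] by simp
      also have "(\<Sum>i<p. \<mu>\<^sup>2 * L0 i) = \<mu>\<^sup>2 * A" unfolding A_def by (simp add: sum_distrib_left)
      finally show "ennreal (2 * \<mu> - \<mu>\<^sup>2 * \<beta>) * (\<Sum>i<p. \<integral>\<^sup>+ \<omega>. ennreal (y i k \<omega>) \<partial>M) \<le> E k + ennreal (\<mu>\<^sup>2 * A)" .
    qed
  qed
  define H where "H = (1 / real p) * (\<Sum>j<p. 1 / L1 j)"
  define A2 where "A2 = (\<Sum>i<p. L0 i / (L1 i)\<^sup>2)"
  define K2 where "K2 = nat \<lceil>2 * \<Delta>0 * A2 / (\<epsilon>\<^sup>2 * (1 - \<zeta>)\<^sup>2 * H\<^sup>2) + 2 * \<Delta>0 * (1 + \<zeta>) / (\<epsilon> * (1 - \<zeta>)\<^sup>2 * H)\<rceil>"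
  have P2: "(\<forall>i<p. L1 i > 0) \<longrightarrow> K2 \<ge> 1 \<longrightarrow>
      Min ((\<lambda>k. \<Sum>i<p. ennreal ((1 / L1 i) / H) * \<integral>\<^sup>+ \<omega>. ennreal (y i k \<omega>) \<partial>M) ` {..<K2}) \<le> ennreal \<epsilon>"
  proof (intro impI)
    assume L1p: "\<forall>i<p. L1 i > 0" and K2: "K2 \<ge> 1"
    have "(\<Sum>j<p. 1 / L1 j) > 0"
      by (rule sum_pos) (use L1p p0 in auto)
    then have H0: "H > 0" unfolding H_def using p_pos by simp
    define u where "u = \<epsilon> * H"
    define \<beta> where "\<beta> = 1 + \<zeta>"
    have u0: "u > 0" unfolding u_def using eps H0 by simp
    have \<beta>0: "\<beta> \<ge> 0" unfolding \<beta>_def using zeta by simp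
    have A20: "A2 \<ge> 0" unfolding A2_def by (intro sum_nonneg) (use L_nonneg in auto)
    have d: "A2 + \<beta> * u > 0" using A20 u0 zeta unfolding \<beta>_def by (simp add: add_nonneg_pos)
    have veq: "2 * \<Delta>0 * A2 / (\<epsilon>\<^sup>2 * (1 - \<zeta>)\<^sup>2 * H\<^sup>2) + 2 * \<Delta>0 * (1 + \<zeta>) / (\<epsilon> * (1 - \<zeta>)\<^sup>2 * H)
        = Q * A2 / u\<^sup>2 + Q * \<beta> / u"
      unfolding Q_def \<beta>_def u_def by (simp add: field_simps)
    have Kge: "real K2 \<ge> Q * A2 / u\<^sup>2 + Q * \<beta> / u"
      unfolding K2_def veq[symmetric] by (rule real_nat_ceiling_ge)
    define \<mu> where "\<mu> = u / (A2 + \<beta> * u)"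
    note ac = arith_choice[OF u0 A20 \<beta>0 d Kge \<mu>_def]
    define c' where "c' = 2 * \<mu> - \<mu>\<^sup>2 * \<beta>"
    have cpos: "c' * H > 0" unfolding c'_def using ac(2) H0 by simp
    show "Min ((\<lambda>k. \<Sum>i<p. ennreal ((1 / L1 i) / H) * \<integral>\<^sup>+ \<omega>. ennreal (y i k \<omega>) \<partial>M) ` {..<K2}) \<le> ennreal \<epsilon>"
    proof (rule final_bound[OF K2 cpos, where r = "\<mu>\<^sup>2 * A2" and Q = Q and E = E])
      show "0 \<le> \<mu>\<^sup>2 * A2" using A20 by simp
      show "0 \<le> Q" by (fact Q0)
      show "0 \<le> \<epsilon>" using eps by simp
      show "(\<Sum>k<K2. E k) \<le> ennreal Q" by (rule totE)
      show "Q + real K2 * (\<mu>\<^sup>2 * A2) \<le> real K2 * (c' * H) * \<epsilon>"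
      proof -
        have eq: "real K2 * ((2 * \<mu> - \<mu>\<^sup>2 * \<beta>) * u) = real K2 * (c' * H) * \<epsilon>"
          unfolding c'_def u_def by (simp add: ac_simps)
        from ac(1) show ?thesis unfolding eq .
      qed
      fix k
      have "ennreal (c' * H) * (\<Sum>i<p. ennreal ((1 / L1 i) / H) * \<integral>\<^sup>+ \<omega>. ennreal (y i k \<omega>) \<partial>M)
          = (\<Sum>i<p. ennreal (c' * H) * (ennreal ((1 / L1 i) / H) * \<integral>\<^sup>+ \<omega>. ennreal (y i k \<omega>) \<partial>M))"
        by (rule sum_distrib_left)
      also have "\<dots> = (\<Sum>i<p. ennreal (2 * (\<mu> / L1 i) - (\<mu> / L1 i)\<^sup>2 * ((1 + \<zeta>) * L1 i)) * (\<integral>\<^sup>+ \<omega>. ennreal (y i k \<omega>) \<partial>M))"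
      proof (rule sum.cong[OF refl])
        fix i assume "i \<in> {..<p}"
        then have Li: "L1 i > 0" using L1p by auto
        have "ennreal (c' * H) * ennreal ((1 / L1 i) / H) = ennreal (c' * H * ((1 / L1 i) / H))"
          using cpos Li H0 by (intro ennreal_mult[symmetric]) auto
        also have "c' * H * ((1 / L1 i) / H) = 2 * (\<mu> / L1 i) - (\<mu> / L1 i)\<^sup>2 * ((1 + \<zeta>) * L1 i)"
          unfolding c'_def \<beta>_def using Li H0 by (simp add: field_simps power2_eq_square)
        finally have eq: "ennreal (c' * H) * ennreal ((1 / L1 i) / H) = ennreal (2 * (\<mu> / L1 i) - (\<mu> / L1 i)\<^sup>2 * ((1 + \<zeta>) * L1 i))" .
        show "ennreal (c' * H) * (ennreal ((1 / L1 i) / H) * \<integral>\<^sup>+ \<omega>. ennreal (y i k \<omega>) \<partial>M)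
          = ennreal (2 * (\<mu> / L1 i) - (\<mu> / L1 i)\<^sup>2 * ((1 + \<zeta>) * L1 i)) * (\<integral>\<^sup>+ \<omega>. ennreal (y i k \<omega>) \<partial>M)"
          unfolding eq[symmetric] by (rule mult.assoc[symmetric])
      qed
      also have "\<dots> \<le> E k + ennreal (\<Sum>i<p. (\<mu> / L1 i)\<^sup>2 * L0 i)"
        by (rule stepG)
      also have "(\<Sum>i<p. (\<mu> / L1 i)\<^sup>2 * L0 i) = \<mu>\<^sup>2 * A2"
        unfolding A2_def by (simp add: sum_distrib_left power_divide)
      finally show "ennreal (c' * H) * (\<Sum>i<p. ennreal ((1 / L1 i) / H) * \<integral>\<^sup>+ \<omega>. ennreal (y i k \<omega>) \<partial>M)
          \<le> E k + ennreal (\<mu>\<^sup>2 * A2)" .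
    qed
  qed
  show ?thesis
    unfolding Let_def using P1 P2
    unfolding K1_def K2_def A_def A2_def L1max_def H_def \<Delta>0_def y_def by simp
qed

end
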